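(* Let $k$ be an unramified non-archimedean local field of residue characteristic $2$ (so $e=1$ and we take $\varpi=2$). Let $B(x)=x_1^2-\Delta x_2^2$ on $k^2$, where $\Delta=1+4v$ is a unit with quadratic defect $4\mathfrak o$ and $v$ is a unit. Let $z=q^{-\beta}$, $w=zq^{-1}$, and $t\in\mathfrak o\setminus\{0\}$ with $|t|=q^{-T}$. Then \[ X^B(\beta;1)=\frac{|2|}{1-w} \qquad\text{and}\qquad X^B(\beta;4t^2)=|2|\,\frac{1+z+w^{2T}(zw+w^3)}{1-w^2}. \]
   Context: $k$ has ring of integers $\mathfrak o$, residue field of cardinality $q$, absolute value normalized by $|2|=q^{-1}$. On $\mathfrak o^n$ use the additive Haar measure of total mass $1$. For a quadratic form $B$ on $k^n$, $\rho\in\mathfrak o$ and integer $\ell\ge0$: $X_\ell^B(\rho)=\operatorname{meas}\{x\in\mathfrak o^n: B(x)-\rho\in 2^{\ell+1}\mathfrak o\}$ and $X^B(\beta;\rho)=\sum_{\ell\ge0}z^\ell X_\ell^B(\rho)$ with $z=q^{-\beta}$. The quadratic defect of $\rho\in k$ is the intersection of all ideals $b\mathfrak o$ over those $b\in k$ for which $\rho-b$ is a square in $k$. *)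

theory Defs
  imports "HOL-Analysis.Analysis"
begin

text \<open>A non-archimedean field k is modelled by a field type 'k together with a
  normalized discrete valuation val : k - {0} -> Z (val 0 is irrelevant).
  The absolute value is |x| = q^(-val x).\<close>

definition intg :: "('k::field \<Rightarrow> int) \<Rightarrow> 'k set" where
  "intg val = {x. x = 0 \<or> 0 \<le> val x}"

definition ideal_of :: "('k::field \<Rightarrow> int) \<Rightarrow> 'k \<Rightarrow> 'k set" where
  "ideal_of val b = (\<lambda>c. b * c) ` intg val"

definition cls :: "('k::field \<Rightarrow> int) \<Rightarrow> nat \<Rightarrow> 'k \<Rightarrow> 'k set" where
  "cls val m x = {y \<in> intg val. x - y \<in> ideal_of val (2 ^ m)}"

text \<open>k is an unramified non-archimedean local field of residue characteristic 2:
  val is a discrete valuation with 2 as uniformizer (val 2 = 1, so val is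
  normalized and e = 1), k is complete, and the residue field o/2o is finite
  of cardinality q.\<close>
definition unram2_local_field :: "('k::field \<Rightarrow> int) \<Rightarrow> nat \<Rightarrow> bool" where
  "unram2_local_field val q \<longleftrightarrow>
     (\<forall>x y. x \<noteq> 0 \<longrightarrow> y \<noteq> 0 \<longrightarrow> val (x * y) = val x + val y) \<and>
     (\<forall>x y. x \<noteq> 0 \<longrightarrow> y \<noteq> 0 \<longrightarrow> x + y \<noteq> 0 \<longrightarrow> min (val x) (val y) \<le> val (x + y)) \<and>
     (2::'k) \<noteq> 0 \<and> val 2 = 1 \<and>
     (\<forall>s :: nat \<Rightarrow> 'k.
        (\<forall>N::int. \<exists>M. \<forall>m\<ge>M. \<forall>n\<ge>M. s m = s n \<or> N \<le> val (s m - s n)) \<longrightarrow>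
        (\<exists>L. \<forall>N::int. \<exists>M. \<forall>n\<ge>M. s n = L \<or> N \<le> val (s n - L))) \<and>
     finite (cls val 1 ` intg val) \<and> card (cls val 1 ` intg val) = q"

definition quad_defect :: "('k::field \<Rightarrow> int) \<Rightarrow> 'k \<Rightarrow> 'k set" where
  "quad_defect val \<rho> = \<Inter> {ideal_of val b | b. \<exists>y. \<rho> - b = y ^ 2}"

text \<open>X_l^B(rho) = meas{x in o^2 : B(x) - rho in 2^(l+1) o}.  This set is a union of
  cosets of (2^(l+1) o)^2, each of Haar measure q^(-2(l+1)) (total mass of o^2 is 1),
  so its measure is (number of such cosets) / q^(2(l+1)).\<close>
definition Xl :: "('k::field \<Rightarrow> int) \<Rightarrow> nat \<Rightarrow> ('k \<Rightarrow> 'k \<Rightarrow> 'k) \<Rightarrow> 'k \<Rightarrow> nat \<Rightarrow> real" where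
  "Xl val q B \<rho> l =
     real (card {(cls val (l+1) x1, cls val (l+1) x2) | x1 x2.
                  x1 \<in> intg val \<and> x2 \<in> intg val \<and> B x1 x2 - \<rho> \<in> ideal_of val (2 ^ (l+1))})
     / real q ^ (2 * (l + 1))"

end

theory Submission
  imports Defs
begin


locale lf =
  fixes val :: "'k::field \<Rightarrow> int" and q :: nat
  assumes vmult: "\<And>x y. x \<noteq> 0 \<Longrightarrow> y \<noteq> 0 \<Longrightarrow> val (x * y) = val x + val y"
    and vultra: "\<And>x y. x \<noteq> 0 \<Longrightarrow> y \<noteq> 0 \<Longrightarrow> x + y \<noteq> 0 \<Longrightarrow> min (val x) (val y) \<le> val (x + y)"
    and two_nz: "(2::'k) \<noteq> 0" and val2: "val 2 = 1"
    and fincls: "finite (cls val 1 ` intg val)" and cardcls: "card (cls val 1 ` intg val) = q"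
begin

abbreviation Oi where "Oi \<equiv> intg val"

definition dv :: "nat \<Rightarrow> 'k \<Rightarrow> bool" where
  "dv n x \<longleftrightarrow> x \<in> ideal_of val (2 ^ n)"

lemma val1: "val 1 = 0"
  using vmult[of 1 1] by simp

lemma valm1: "val (-1) = 0"
  using vmult[of "-1" "-1"] val1 by simp

lemma val_neg: "val (- x) = val x" if "x \<noteq> 0"
  using vmult[of "-1" x] valm1 that by simp

lemma val_inv: "val (inverse x) = - val x" if "x \<noteq> 0"
  using vmult[of x "inverse x"] val1 that by simp

lemma val_pow: "val (x ^ n) = int n * val x" if "x \<noteq> 0"
  by (induction n) (auto simp: val1 vmult that algebra_simps)

lemma val_div: "val (x / y) = val x - val y" if "x \<noteq> 0" "y \<noteq> 0"
  using vmult[of x "inverse y"] val_inv[of y] that by (simp add: divide_inverse)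

lemma val_2pow: "val ((2::'k) ^ n) = int n"
  using val_pow[OF two_nz] val2 by simp

lemma two_pow_nz: "(2::'k) ^ n \<noteq> 0" using two_nz by simp

lemma dv_iff: "dv n x \<longleftrightarrow> x = 0 \<or> int n \<le> val x"
proof
  assume "dv n x"
  then obtain c where c: "c \<in> Oi" "x = 2^n * c" unfolding dv_def ideal_of_def by auto
  show "x = 0 \<or> int n \<le> val x"
  proof (cases "c = 0")
    case False
    then have "val x = int n + val c" using c vmult[OF two_pow_nz False] val_2pow by simp
    moreover have "0 \<le> val c" using c False by (simp add: intg_def)
    ultimately show ?thesis by simp
  qed (use c in simp)
next
  assume h: "x = 0 \<or> int n \<le> val x"
  show "dv n x"
  proof (cases "x = 0")
    case True
    then show ?thesis unfolding dv_def ideal_of_def intg_def by (auto intro!: image_eqI[of _ _ 0])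
  next
    case False
    let ?c = "x / 2^n"
    have "?c \<noteq> 0" using False two_pow_nz by simp
    have "val ?c = val x - int n" using val_div[OF False two_pow_nz] val_2pow by simp
    then have "?c \<in> Oi" using h False by (simp add: intg_def)
    moreover have "x = 2^n * ?c" using two_pow_nz by simp
    ultimately show ?thesis unfolding dv_def ideal_of_def by blast
  qed
qed

lemma O_iff: "x \<in> Oi \<longleftrightarrow> dv 0 x"
  by (simp add: dv_iff intg_def)

lemma dv_0[simp]: "dv n 0" by (simp add: dv_iff)

lemma dv_add: "dv n x \<Longrightarrow> dv n y \<Longrightarrow> dv n (x + y)"
  unfolding dv_iff using vultra[of x y] by (cases "x = 0"; cases "y = 0"; cases "x + y = 0") auto

lemma dv_neg: "dv n (- x) \<longleftrightarrow> dv n x"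
  unfolding dv_iff by (cases "x = 0") (auto simp: val_neg)

lemma dv_diff: "dv n x \<Longrightarrow> dv n y \<Longrightarrow> dv n (x - y)"
  using dv_add[of n x "-y"] dv_neg[of n y] by simp

lemma dv_mult: "dv m x \<Longrightarrow> dv n y \<Longrightarrow> dv (m + n) (x * y)"
  unfolding dv_iff by (cases "x = 0"; cases "y = 0") (auto simp: vmult)

lemma dv_mono: "dv m x \<Longrightarrow> n \<le> m \<Longrightarrow> dv n x"
  unfolding dv_iff by auto

lemma dv_multO: "dv m x \<Longrightarrow> y \<in> Oi \<Longrightarrow> dv m (x * y)"
  using dv_mult[of m x 0 y] by (simp add: O_iff)

lemma dv_multO': "dv m x \<Longrightarrow> y \<in> Oi \<Longrightarrow> dv m (y * x)"
  using dv_multO by (simp add: mult.commute)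

lemma dv_2pow: "dv n (2 ^ n)"
  by (simp add: dv_iff val_2pow)

lemma dv_2pow_mult: "x \<in> Oi \<Longrightarrow> dv n (2 ^ n * x)"
  using dv_multO[OF dv_2pow] by simp

lemma dv_2pow_mult_iff: "dv (n + k) (2 ^ k * x) \<longleftrightarrow> dv n x"
proof (cases "x = 0")
  case False
  then have "val (2 ^ k * x) = int k + val x" using vmult[OF two_pow_nz False] val_2pow by simp
  then show ?thesis using False two_pow_nz two_nz by (simp add: dv_iff)
qed simp

lemma dv_sq: "dv 1 (x * x) \<Longrightarrow> dv 1 x"
  unfolding dv_iff by (cases "x = 0") (auto simp: vmult)

lemma O_add: "x \<in> Oi \<Longrightarrow> y \<in> Oi \<Longrightarrow> x + y \<in> Oi" by (simp add: O_iff dv_add)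
lemma O_diff: "x \<in> Oi \<Longrightarrow> y \<in> Oi \<Longrightarrow> x - y \<in> Oi" by (simp add: O_iff dv_diff)
lemma O_neg: "x \<in> Oi \<Longrightarrow> - x \<in> Oi" by (simp add: O_iff dv_neg)
lemma O_mult: "x \<in> Oi \<Longrightarrow> y \<in> Oi \<Longrightarrow> x * y \<in> Oi" using dv_mult[of 0 x 0 y] by (simp add: O_iff)
lemma O_0: "0 \<in> Oi" by (simp add: O_iff)
lemma O_1: "1 \<in> Oi" by (simp add: O_iff dv_iff val1)
lemma O_2: "2 \<in> Oi" by (simp add: O_iff dv_iff val2)
lemma O_pow: "x \<in> Oi \<Longrightarrow> x ^ n \<in> Oi" by (induction n) (auto simp: O_1 O_mult)
lemma dv_O: "dv n x \<Longrightarrow> x \<in> Oi" by (simp add: O_iff dv_mono)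

lemma unit_inv: "x \<in> Oi \<Longrightarrow> \<not> dv 1 x \<Longrightarrow> inverse x \<in> Oi \<and> x \<noteq> 0"
  unfolding O_iff dv_iff by (auto simp: val_inv)

lemma not_dv1_1: "\<not> dv 1 (1::'k)" by (simp add: dv_iff val1)


lemma dv_Suc_2: "dv (Suc n) (2 * x) \<longleftrightarrow> dv n x"
  using dv_2pow_mult_iff[of n 1 x] by simp

lemma dv1_E: "dv 1 x \<Longrightarrow> \<exists>c\<in>Oi. x = 2 * c"
  unfolding dv_def ideal_of_def by auto

lemma dvn_E: "dv n x \<Longrightarrow> \<exists>c\<in>Oi. x = 2^n * c"
  unfolding dv_def ideal_of_def by auto

lemma cls_iff: "y \<in> cls val m x \<longleftrightarrow> y \<in> Oi \<and> dv m (x - y)"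
  by (simp add: cls_def dv_def)

lemma cls_eq_iff: "x \<in> Oi \<Longrightarrow> y \<in> Oi \<Longrightarrow> cls val m x = cls val m y \<longleftrightarrow> dv m (x - y)"
proof
  assume "x \<in> Oi" "y \<in> Oi" "cls val m x = cls val m y"
  moreover have "x \<in> cls val m x" using \<open>x \<in> Oi\<close> by (simp add: cls_iff)
  ultimately have "x \<in> cls val m y" by simp
  then have "dv m (y - x)" by (simp add: cls_iff)
  then show "dv m (x - y)" using dv_neg[of m "y - x"] by simp
next
  assume a: "x \<in> Oi" "y \<in> Oi" "dv m (x - y)"
  show "cls val m x = cls val m y"
  proof (auto simp: cls_iff)
    fix z assume "dv m (x - z)" then show "dv m (y - z)"
      using dv_diff[OF _ a(3)] by (metis diff_diff_eq2 diff_add_cancel add_diff_cancel_left' dv_neg minus_diff_eq)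
  next
    fix z assume "dv m (y - z)" then show "dv m (x - z)"
      using dv_add[OF a(3)] by (metis diff_add_cancel add_diff_eq diff_diff_eq2)
  qed
qed

definition chs :: "'k set \<Rightarrow> 'k" where
  "chs C = (if 0 \<in> C then 0 else (SOME x. x \<in> C))"

definition R :: "'k set" where "R = chs ` (cls val 1 ` Oi)"

lemma chs_in: "x \<in> Oi \<Longrightarrow> chs (cls val 1 x) \<in> cls val 1 x"
proof -
  assume x: "x \<in> Oi"
  then have "x \<in> cls val 1 x" by (simp add: cls_iff)
  then show ?thesis unfolding chs_def by (metis (mono_tags, lifting) someI)
qed

lemma chs_cls: "x \<in> Oi \<Longrightarrow> cls val 1 (chs (cls val 1 x)) = cls val 1 x"
proof -
  assume x: "x \<in> Oi"
  have "chs (cls val 1 x) \<in> Oi" "dv 1 (x - chs (cls val 1 x))" using chs_in[OF x] by (auto simp: cls_iff)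
  then show ?thesis using cls_eq_iff x dv_neg by (metis minus_diff_eq)
qed

lemma R_O: "R \<subseteq> Oi" using chs_in by (auto simp: R_def cls_iff)

lemma R_0: "0 \<in> R"
proof -
  have "chs (cls val 1 0) = 0" unfolding chs_def by (simp add: cls_iff O_0)
  then show ?thesis unfolding R_def using O_0 by force
qed

lemma R_fin: "finite R" using fincls by (simp add: R_def)

lemma R_card: "card R = q"
proof -
  have "inj_on chs (cls val 1 ` Oi)"
    by (rule inj_onI) (metis chs_cls imageE)
  then show ?thesis unfolding R_def using card_image cardcls by metis
qed

lemma R_ex: "x \<in> Oi \<Longrightarrow> \<exists>r\<in>R. dv 1 (x - r)"
  using chs_in by (auto simp: R_def cls_iff)

lemma R_uniq: "r \<in> R \<Longrightarrow> r' \<in> R \<Longrightarrow> dv 1 (r - r') \<Longrightarrow> r = r'"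
proof -
  assume a: "r \<in> R" "r' \<in> R" "dv 1 (r - r')"
  then obtain x x' where x: "x \<in> Oi" "x' \<in> Oi" "r = chs (cls val 1 x)" "r' = chs (cls val 1 x')"
    by (auto simp: R_def)
  have "r \<in> Oi" "r' \<in> Oi" using a R_O by auto
  then have "cls val 1 r = cls val 1 r'" using cls_eq_iff a by simp
  then have "cls val 1 x = cls val 1 x'" using chs_cls x by metis
  then show ?thesis using x by simp
qed

lemma q_ge2: "2 \<le> q"
proof -
  obtain r where r: "r \<in> R" "dv 1 (1 - r)" using R_ex O_1 by blast
  have "r \<noteq> 0" using r not_dv1_1 by auto
  then have "{0, r} \<subseteq> R" using R_0 r by auto
  then have "card {0, r} \<le> card R" using R_fin card_mono by blast
  then show ?thesis using \<open>r \<noteq> 0\<close> R_card by simp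
qed

fun Rn :: "nat \<Rightarrow> 'k set" where
  "Rn 0 = {0}"
| "Rn (Suc n) = (\<lambda>(r, y). r + 2 * y) ` (R \<times> Rn n)"

lemma Rn_O: "Rn n \<subseteq> Oi"
proof (induction n)
  case (Suc n)
  then show ?case using R_O by (auto intro!: O_add O_mult O_2)
qed (simp add: O_0)

lemma Rn_fin: "finite (Rn n)"
  by (induction n) (auto simp: R_fin)

lemma Rn_0: "0 \<in> Rn n"
  by (induction n) (use R_0 in force)+

lemma Rn_ex: "x \<in> Oi \<Longrightarrow> \<exists>y\<in>Rn n. dv n (x - y)"
proof (induction n arbitrary: x)
  case 0 then show ?case by (simp add: O_iff)
next
  case (Suc n)
  obtain r where r: "r \<in> R" "dv 1 (x - r)" using R_ex Suc.prems by blast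
  obtain c where c: "c \<in> Oi" "x - r = 2 * c" using dv1_E r(2) by blast
  obtain y where y: "y \<in> Rn n" "dv n (c - y)" using Suc.IH c(1) by blast
  have "x - (r + 2 * y) = 2 * (c - y)" using c(2) by (simp add: algebra_simps)
  then have "dv (Suc n) (x - (r + 2 * y))" using dv_Suc_2[of n "c - y"] y by metis
  moreover have "r + 2 * y \<in> Rn (Suc n)" using r y by force
  ultimately show ?case by blast
qed

lemma Rn_uniq: "y \<in> Rn n \<Longrightarrow> y' \<in> Rn n \<Longrightarrow> dv n (y - y') \<Longrightarrow> y = y'"
proof (induction n arbitrary: y y')
  case 0 then show ?case by simp
next
  case (Suc n)
  obtain r z where rz: "r \<in> R" "z \<in> Rn n" "y = r + 2 * z" using Suc.prems by auto
  obtain r' z' where rz': "r' \<in> R" "z' \<in> Rn n" "y' = r' + 2 * z'" using Suc.prems by auto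
  have zO: "z - z' \<in> Oi" using rz rz' Rn_O O_diff by blast
  have e: "y - y' = (r - r') + 2 * (z - z')" using rz rz' by (simp add: algebra_simps)
  have "dv 1 (y - y')" using Suc.prems(3) dv_mono by fastforce
  moreover have "dv 1 (2 * (z - z'))" using dv_2pow_mult[OF zO, of 1] by simp
  ultimately have "dv 1 (r - r')" using e dv_diff by fastforce
  then have "r = r'" using R_uniq rz rz' by blast
  then have "dv (Suc n) (2 * (z - z'))" using e Suc.prems(3) by simp
  then have "z = z'" using Suc.IH rz rz' dv_Suc_2 by blast
  then show ?case using rz rz' \<open>r = r'\<close> by simp
qed

lemma Rn_inj: "inj_on (\<lambda>(r, y). r + 2 * y) (R \<times> Rn n)"
proof (rule inj_onI, clarsimp)
  fix r y r' y' assume a: "r \<in> R" "y \<in> Rn n" "r' \<in> R" "y' \<in> Rn n" "r + 2 * y = r' + 2 * y'"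
  have "r + 2 * y \<in> Rn (Suc n)" "r' + 2 * y' \<in> Rn (Suc n)" using a by force+
  have yO: "y - y' \<in> Oi" using a Rn_O O_diff by blast
  have "r - r' = 2 * (y' - y)" using a(5) by (simp add: algebra_simps)
  moreover have "dv 1 (2 * (y' - y))" using dv_2pow_mult[OF O_neg[OF yO], of 1] by simp
  ultimately have "r = r'" using R_uniq a by metis
  then show "r = r' \<and> y = y'" using a(5) two_nz by simp
qed

lemma Rn_card: "card (Rn n) = q ^ n"
proof (induction n)
  case (Suc n)
  have "card (Rn (Suc n)) = card (R \<times> Rn n)" using card_image[OF Rn_inj] by simp
  then show ?case using Suc R_card by (simp add: card_cartesian_product)
qed simp

lemma Rn_Suc2: "Rn (Suc n) = (\<lambda>(y, r). y + 2 ^ n * r) ` (Rn n \<times> R)"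
proof (induction n)
  case 0
  show ?case by (force simp: image_iff)
next
  case (Suc n)
  show ?case
  proof
    show "Rn (Suc (Suc n)) \<subseteq> (\<lambda>(y, r). y + 2 ^ Suc n * r) ` (Rn (Suc n) \<times> R)"
    proof
      fix x assume "x \<in> Rn (Suc (Suc n))"
      then obtain r z where rz: "r \<in> R" "z \<in> Rn (Suc n)" "x = r + 2 * z" by auto
      then obtain y r' where yr: "y \<in> Rn n" "r' \<in> R" "z = y + 2 ^ n * r'" using Suc by auto
      have "x = (r + 2 * y) + 2 ^ Suc n * r'" using rz yr by (simp add: algebra_simps)
      moreover have "r + 2 * y \<in> Rn (Suc n)" using rz yr by force
      ultimately show "x \<in> (\<lambda>(y, r). y + 2 ^ Suc n * r) ` (Rn (Suc n) \<times> R)" using yr by force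
    qed
  next
    show "(\<lambda>(y, r). y + 2 ^ Suc n * r) ` (Rn (Suc n) \<times> R) \<subseteq> Rn (Suc (Suc n))"
    proof (rule subsetI)
      fix x assume "x \<in> (\<lambda>(y, r). y + 2 ^ Suc n * r) ` (Rn (Suc n) \<times> R)"
      then obtain z r' where a: "z \<in> Rn (Suc n)" "r' \<in> R" "x = z + 2 * (2 ^ n * r')"
        by (auto simp del: Rn.simps)
      then obtain r y where ry: "r \<in> R" "y \<in> Rn n" "z = r + 2 * y" by auto
      have "y + 2 ^ n * r' \<in> Rn (Suc n)" using Suc ry a by force
      moreover have "z + 2 * (2 ^ n * r') = r + 2 * (y + 2 ^ n * r')" using ry by (simp add: algebra_simps)
      ultimately show "x \<in> Rn (Suc (Suc n))" using ry a(3)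
        by (subst Rn.simps(2), intro image_eqI[where x="(r, y + 2 ^ n * r')"]) auto
    qed
  qed
qed

lemma Rn_inj2: "inj_on (\<lambda>(y, r). y + 2 ^ n * r) (Rn n \<times> R)"
proof (rule inj_onI, clarsimp)
  fix r y r' y' assume a: "y \<in> Rn n" "r \<in> R" "y' \<in> Rn n" "r' \<in> R" "y + 2 ^ n * r = y' + 2 ^ n * r'"
  have rO: "r' - r \<in> Oi" using a R_O O_diff by blast
  have "y - y' = 2 ^ n * (r' - r)" using a(5) by (simp add: algebra_simps)
  then have "y = y'" using Rn_uniq a dv_2pow_mult[OF rO] by metis
  then show "y = y' \<and> r = r'" using a(5) two_pow_nz two_nz by simp
qed

end


lemma card_image_filter:
  assumes "inj_on f (A \<times> B)" "finite A" "finite B"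
  shows "card {z \<in> f ` (A \<times> B). P z} = (\<Sum>a\<in>A. card {b\<in>B. P (f (a, b))})"
proof -
  let ?S = "SIGMA a:A. {b\<in>B. P (f (a, b))}"
  have e: "{z \<in> f ` (A \<times> B). P z} = f ` ?S" by auto
  have sub: "?S \<subseteq> A \<times> B" by auto
  have "inj_on f ?S" using inj_on_subset[OF assms(1) sub] .
  then have "card (f ` ?S) = card ?S" by (rule card_image)
  also have "\<dots> = (\<Sum>a\<in>A. card {b\<in>B. P (f (a, b))})" using assms(2,3) by (simp add: card_SigmaI)
  finally show ?thesis using e by simp
qed

lemma card_pairs:
  assumes "finite A" "finite B"
  shows "card {p \<in> A \<times> B. P (fst p) (snd p)} = (\<Sum>a\<in>A. card {b\<in>B. P a b})"
  using card_image_filter[of id A B "\<lambda>p. P (fst p) (snd p)"] assms by simp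

context lf begin

definition inv1 :: "nat \<Rightarrow> ('k \<Rightarrow> bool) \<Rightarrow> bool" where
  "inv1 n P \<longleftrightarrow> (\<forall>x\<in>Oi. \<forall>y\<in>Oi. dv n (x - y) \<longrightarrow> (P x \<longleftrightarrow> P y))"

lemma lift1: "card {x \<in> Rn (Suc n). P x} = (\<Sum>y\<in>Rn n. card {r\<in>R. P (y + 2 ^ n * r)})"
  using card_image_filter[OF Rn_inj2 Rn_fin R_fin, where P=P] Rn_Suc2[of n] by simp

lemma lift2: "card {x \<in> Rn (Suc n). P x} = (\<Sum>r\<in>R. card {y\<in>Rn n. P (r + 2 * y)})"
  using card_image_filter[OF Rn_inj R_fin Rn_fin, where P=P] by simp

lemma sum_if_card: "finite A \<Longrightarrow> (\<Sum>y\<in>A. if P y then c else 0) = c * card {y\<in>A. P y}"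
  by (simp add: sum.inter_filter[symmetric])

lemma lift_inv:
  assumes "inv1 n P"
  shows "card {x \<in> Rn (Suc n). P x} = q * card {y \<in> Rn n. P y}"
proof -
  have "card {r\<in>R. P (y + 2 ^ n * r)} = (if P y then q else 0)" if y: "y \<in> Rn n" for y
  proof -
    have "P (y + 2 ^ n * r) \<longleftrightarrow> P y" if r: "r \<in> R" for r
    proof -
      have "y \<in> Oi" "r \<in> Oi" using y r Rn_O R_O by auto
      moreover have "y + 2 ^ n * r \<in> Oi" using calculation by (intro O_add O_mult O_pow O_2)
      moreover have "dv n ((y + 2 ^ n * r) - y)" using dv_2pow_mult[OF \<open>r \<in> Oi\<close>, of n] by simp
      ultimately show ?thesis using assms unfolding inv1_def by blast
    qed
    then have "{r\<in>R. P (y + 2 ^ n * r)} = (if P y then R else {})" by auto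
    then show ?thesis using R_card by simp
  qed
  then have "card {x \<in> Rn (Suc n). P x} = (\<Sum>y\<in>Rn n. if P y then q else 0)"
    using lift1 by simp
  also have "\<dots> = q * card {y \<in> Rn n. P y}" using sum_if_card Rn_fin by blast
  finally show ?thesis .
qed

lemma hensel1:
  assumes "e \<in> Oi" "g \<in> Oi" "\<not> dv 1 g"
  shows "card {r\<in>R. dv 1 (e + g * r)} = 1"
proof -
  have gi: "inverse g \<in> Oi" "g \<noteq> 0" using unit_inv assms by auto
  define r0 where "r0 = - e * inverse g"
  have r0O: "r0 \<in> Oi" using gi assms by (simp add: r0_def O_mult O_neg)
  obtain r where r: "r \<in> R" "dv 1 (r0 - r)" using R_ex r0O by blast
  have rO: "r \<in> Oi" using r R_O by auto
  have ger: "e + g * r = g * (r - r0)" using gi by (simp add: r0_def algebra_simps)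
  have "dv 1 (e + g * r)" unfolding ger using dv_multO'[OF _ assms(2), of 1 "r - r0"] r dv_neg
    by (metis minus_diff_eq)
  have u: "r' = r" if r': "r' \<in> R" "dv 1 (e + g * r')" for r'
  proof -
    have "dv 1 ((e + g * r') - (e + g * r))" using dv_diff r' \<open>dv 1 (e + g * r)\<close> by blast
    then have "dv 1 (inverse g * ((e + g * r') - (e + g * r)))" using dv_multO' gi by blast
    moreover have "inverse g * ((e + g * r') - (e + g * r)) = (inverse g * g) * (r' - r)"
      by (simp add: algebra_simps)
    moreover have "inverse g * g = 1" using gi by simp
    ultimately show "r' = r" using R_uniq r r' by auto
  qed
  have "{r\<in>R. dv 1 (e + g * r)} = {r}" using u r \<open>dv 1 (e + g * r)\<close> by blast
  then show ?thesis by simp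
qed

definition rep :: "nat \<Rightarrow> 'k \<Rightarrow> 'k" where
  "rep n x = (SOME y. y \<in> Rn n \<and> dv n (x - y))"

lemma rep: "x \<in> Oi \<Longrightarrow> rep n x \<in> Rn n \<and> dv n (x - rep n x)"
  unfolding rep_def using Rn_ex[of x n] by (metis (mono_tags, lifting) someI)

lemma dv_trans: "dv n (x - y) \<Longrightarrow> dv n (y - z) \<Longrightarrow> dv n (x - z)"
proof -
  assume "dv n (x - y)" "dv n (y - z)"
  then have "dv n ((x - y) + (y - z))" by (rule dv_add)
  then show ?thesis by simp
qed

lemma dv_sym: "dv n (x - y) \<Longrightarrow> dv n (y - x)"
  using dv_neg by (metis minus_diff_eq)

lemma transl_le:
  assumes "c \<in> Oi" "inv1 n P"
  shows "card {x\<in>Rn n. P (x + c)} \<le> card {x\<in>Rn n. P x}"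
proof -
  let ?f = "\<lambda>x. rep n (x + c)"
  have inj: "inj_on ?f {x\<in>Rn n. P (x + c)}"
  proof (rule inj_onI)
    fix x y assume xy: "x \<in> {x\<in>Rn n. P (x + c)}" "y \<in> {x\<in>Rn n. P (x + c)}" "?f x = ?f y"
    have "x + c \<in> Oi" "y + c \<in> Oi" using xy Rn_O assms O_add by auto
    then have "dv n (x + c - ?f x)" "dv n (y + c - ?f y)" using rep by auto
    then have "dv n ((x + c) - (y + c))" using xy(3) dv_trans dv_sym by metis
    then show "x = y" using Rn_uniq xy by auto
  qed
  have "?f ` {x\<in>Rn n. P (x + c)} \<subseteq> {x\<in>Rn n. P x}"
  proof (rule subsetI)
    fix y assume "y \<in> ?f ` {x\<in>Rn n. P (x + c)}"
    then obtain x where x: "x \<in> Rn n" "P (x + c)" "y = ?f x" by auto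
    have xc: "x + c \<in> Oi" using x Rn_O assms O_add by auto
    then have "?f x \<in> Rn n" "dv n (x + c - ?f x)" using rep by auto
    moreover have "?f x \<in> Oi" using calculation Rn_O by auto
    ultimately have "?f x \<in> Rn n" "P (?f x)" using assms(2) xc x unfolding inv1_def by blast+
    then show "y \<in> {x\<in>Rn n. P x}" using x(3) by simp
  qed
  then show ?thesis using card_inj_on_le[OF inj] Rn_fin by auto
qed

lemma inv1_shift: "c \<in> Oi \<Longrightarrow> inv1 n P \<Longrightarrow> inv1 n (\<lambda>x. P (x + c))"
  unfolding inv1_def
proof (intro ballI impI)
  fix x y assume a: "c \<in> Oi" "\<forall>x\<in>Oi. \<forall>y\<in>Oi. dv n (x - y) \<longrightarrow> P x = P y" "x \<in> Oi" "y \<in> Oi" "dv n (x - y)"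
  have "dv n ((x + c) - (y + c))" using a by simp
  then show "P (x + c) = P (y + c)" using a O_add by blast
qed

lemma transl:
  assumes "c \<in> Oi" "inv1 n P"
  shows "card {x\<in>Rn n. P (x + c)} = card {x\<in>Rn n. P x}"
proof -
  have "card {x\<in>Rn n. P ((x + - c) + c)} \<le> card {x\<in>Rn n. P (x + c)}"
    using transl_le[OF O_neg[OF assms(1)] inv1_shift[OF assms]] .
  then show ?thesis using transl_le[OF assms] by simp
qed

definition inv2 :: "nat \<Rightarrow> ('k \<Rightarrow> 'k \<Rightarrow> bool) \<Rightarrow> bool" where
  "inv2 n P \<longleftrightarrow> (\<forall>x1\<in>Oi. \<forall>x2\<in>Oi. \<forall>y1\<in>Oi. \<forall>y2\<in>Oi.
      dv n (x1 - y1) \<longrightarrow> dv n (x2 - y2) \<longrightarrow> (P x1 x2 \<longleftrightarrow> P y1 y2))"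

lemma cls_count:
  assumes "inv2 n P"
  shows "card {(cls val n x1, cls val n x2) | x1 x2. x1 \<in> Oi \<and> x2 \<in> Oi \<and> P x1 x2}
       = card {p \<in> Rn n \<times> Rn n. P (fst p) (snd p)}"
proof -
  let ?f = "\<lambda>p. (cls val n (fst p), cls val n (snd p))"
  let ?S = "{p \<in> Rn n \<times> Rn n. P (fst p) (snd p)}"
  let ?C = "{(cls val n x1, cls val n x2) | x1 x2. x1 \<in> Oi \<and> x2 \<in> Oi \<and> P x1 x2}"
  have e: "?C = ?f ` ?S"
  proof
    show "?f ` ?S \<subseteq> ?C"
    proof (rule subsetI)
      fix z assume "z \<in> ?f ` ?S"
      then obtain a b where ab: "a \<in> Rn n" "b \<in> Rn n" "P a b" "z = (cls val n a, cls val n b)" by auto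
      then have "a \<in> Oi" "b \<in> Oi" using Rn_O by auto
      then show "z \<in> ?C" using ab by blast
    qed
  next
    show "?C \<subseteq> ?f ` ?S"
    proof (rule subsetI)
      fix z assume "z \<in> ?C"
      then obtain x1 x2 where x: "x1 \<in> Oi" "x2 \<in> Oi" "P x1 x2" "z = (cls val n x1, cls val n x2)" by blast
      have r1: "rep n x1 \<in> Rn n" "dv n (x1 - rep n x1)" using rep x by auto
      have r2: "rep n x2 \<in> Rn n" "dv n (x2 - rep n x2)" using rep x by auto
      have o: "rep n x1 \<in> Oi" "rep n x2 \<in> Oi" using r1 r2 Rn_O by auto
      have "P (rep n x1) (rep n x2)" using assms x(1,2,3) r1(2) r2(2) o unfolding inv2_def by blast
      moreover have "cls val n x1 = cls val n (rep n x1)" using cls_eq_iff[OF x(1) o(1)] r1(2) by blast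
      moreover have "cls val n x2 = cls val n (rep n x2)" using cls_eq_iff[OF x(2) o(2)] r2(2) by blast
      ultimately show "z \<in> ?f ` ?S"
        using r1 r2 x(4) by (intro image_eqI[where x="(rep n x1, rep n x2)"]) auto
    qed
  qed
  have "inj_on ?f ?S"
  proof (rule inj_onI)
    fix p p' assume h: "p \<in> ?S" "p' \<in> ?S" "?f p = ?f p'"
    then have m: "fst p \<in> Rn n" "snd p \<in> Rn n" "fst p' \<in> Rn n" "snd p' \<in> Rn n" by auto
    then have o: "fst p \<in> Oi" "snd p \<in> Oi" "fst p' \<in> Oi" "snd p' \<in> Oi" using Rn_O by auto
    have "dv n (fst p - fst p')" using cls_eq_iff[OF o(1) o(3)] h(3) by simp
    then have 1: "fst p = fst p'" using Rn_uniq m by blast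
    have "dv n (snd p - snd p')" using cls_eq_iff[OF o(2) o(4)] h(3) by simp
    then have 2: "snd p = snd p'" using Rn_uniq m by blast
    show "p = p'" using 1 2 by (simp add: prod_eq_iff)
  qed
  then have "card (?f ` ?S) = card ?S" by (rule card_image)
  then show ?thesis using e by simp
qed

end


definition ind :: "bool \<Rightarrow> nat" where "ind b = (if b then 1 else 0)"

lemma card_ind: "finite B \<Longrightarrow> card {b\<in>B. P b} = (\<Sum>b\<in>B. ind (P b))"
  by (simp add: ind_def sum.inter_filter[symmetric])

locale lfu = lf val q for val :: "'k::field \<Rightarrow> int" and q +
  fixes u :: 'k
  assumes uO: "u \<in> Oi" and anis: "\<And>r. r \<in> Oi \<Longrightarrow> \<not> dv 1 (r * r + r - u)"
begin

definition G :: "'k \<Rightarrow> 'k \<Rightarrow> 'k" where "G a c = a * a + 2 * a * c - 4 * u * c * c"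
definition phi :: "'k \<Rightarrow> 'k \<Rightarrow> 'k" where "phi a b = a * a + a * b - u * b * b"

definition S2 :: "'k set \<Rightarrow> 'k set \<Rightarrow> ('k \<Rightarrow> 'k \<Rightarrow> bool) \<Rightarrow> nat" where
  "S2 A B P = (\<Sum>a\<in>A. \<Sum>b\<in>B. ind (P a b))"

lemma card_S2: "finite A \<Longrightarrow> finite B \<Longrightarrow> card {p\<in>A \<times> B. P (fst p) (snd p)} = S2 A B P"
  by (simp add: card_pairs card_ind S2_def)

lemma S2_swap: "S2 A B P = S2 B A (\<lambda>b a. P a b)"
  unfolding S2_def by (rule sum.swap)

lemma sum_lift1: "(\<Sum>a\<in>Rn (Suc n). F a) = (\<Sum>a\<in>Rn n. \<Sum>r\<in>R. F (a + 2 ^ n * r))"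
proof -
  have "(\<Sum>a\<in>Rn (Suc n). F a) = (\<Sum>(a, r)\<in>Rn n \<times> R. F (a + 2 ^ n * r))"
    unfolding Rn_Suc2[of n] using sum.reindex[OF Rn_inj2[of n], of F]
    by (simp add: comp_def case_prod_unfold)
  also have "\<dots> = (\<Sum>a\<in>Rn n. \<Sum>r\<in>R. F (a + 2 ^ n * r))"
    by (simp add: sum.cartesian_product)
  finally show ?thesis .
qed

lemma sum_lift2: "(\<Sum>a\<in>Rn (Suc n). F a) = (\<Sum>r\<in>R. \<Sum>y\<in>Rn n. F (r + 2 * y))"
proof -
  have "(\<Sum>a\<in>Rn (Suc n). F a) = (\<Sum>(r, y)\<in>R \<times> Rn n. F (r + 2 * y))"
    using sum.reindex[OF Rn_inj[of n], of F] by (simp add: comp_def case_prod_unfold)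
  also have "\<dots> = (\<Sum>r\<in>R. \<Sum>y\<in>Rn n. F (r + 2 * y))"
    by (simp add: sum.cartesian_product)
  finally show ?thesis .
qed

definition invf :: "nat \<Rightarrow> ('k \<Rightarrow> 'b) \<Rightarrow> bool" where
  "invf n F \<longleftrightarrow> (\<forall>x\<in>Oi. \<forall>y\<in>Oi. dv n (x - y) \<longrightarrow> F x = F y)"

lemma sum_lift_inv:
  assumes "invf n (F :: 'k \<Rightarrow> nat)"
  shows "(\<Sum>a\<in>Rn (Suc n). F a) = q * (\<Sum>a\<in>Rn n. F a)"
proof -
  have "(\<Sum>r\<in>R. F (a + 2 ^ n * r)) = q * F a" if a: "a \<in> Rn n" for a
  proof -
    have "F (a + 2 ^ n * r) = F a" if r: "r \<in> R" for r
    proof -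
      have o: "a \<in> Oi" "r \<in> Oi" using a r Rn_O R_O by auto
      then have "a + 2 ^ n * r \<in> Oi" by (intro O_add O_mult O_pow O_2)
      moreover have "dv n ((a + 2 ^ n * r) - a)" using dv_2pow_mult[OF o(2), of n] by simp
      ultimately show ?thesis using assms o unfolding invf_def by blast
    qed
    then show ?thesis using R_card by simp
  qed
  then show ?thesis using sum_lift1[of F n] by (simp add: sum_distrib_left)
qed

lemma Rn1: "Rn 1 = R"
proof -
  have e: "Rn 1 = (\<lambda>(r, y). r + 2 * y) ` (R \<times> {0})" by (simp only: One_nat_def Rn.simps)
  show ?thesis unfolding e by force
qed

lemma unit_val: "g \<in> Oi \<Longrightarrow> \<not> dv 1 g \<Longrightarrow> g \<noteq> 0 \<and> val g = 0"
  unfolding O_iff dv_iff by auto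

lemma dv_unit_mult: "g \<in> Oi \<Longrightarrow> \<not> dv 1 g \<Longrightarrow> dv n (g * x) \<longleftrightarrow> dv n x"
proof (cases "x = 0")
  case False
  assume g: "g \<in> Oi" "\<not> dv 1 g"
  then have "g \<noteq> 0" "val g = 0" using unit_val by auto
  then have "val (g * x) = val x" "g * x \<noteq> 0" using vmult[of g x] False by auto
  then show ?thesis by (simp add: dv_iff)
qed simp

lemma ind_hensel: "e \<in> Oi \<Longrightarrow> g \<in> Oi \<Longrightarrow> \<not> dv 1 g \<Longrightarrow> (\<Sum>r\<in>R. ind (dv 1 (e + g * r))) = 1"
  using hensel1 card_ind[OF R_fin] by metis

lemma R_dv1: "r \<in> R \<Longrightarrow> dv 1 r \<Longrightarrow> r = 0"
  using R_uniq[of r 0] R_0 by simp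

lemma sqrt1:
  assumes s: "s \<in> Oi"
  shows "(\<Sum>a\<in>R. ind (dv 1 (a * a - s))) = 1"
proof -
  let ?f = "\<lambda>a. rep 1 (a * a)"
  have sq: "a = b" if "a \<in> R" "b \<in> R" "dv 1 (a * a - b * b)" for a b
  proof -
    have o: "a \<in> Oi" "b \<in> Oi" using that R_O by auto
    have "(a - b) * (a - b) = (a * a - b * b) - 2 * (b * (a - b))" by (simp add: algebra_simps)
    moreover have "dv 1 (2 * (b * (a - b)))" using dv_2pow_mult[of "b * (a - b)" 1] o
      by (simp add: O_mult O_diff)
    ultimately have "dv 1 ((a - b) * (a - b))" using dv_diff[OF that(3)] by simp
    then have "dv 1 (a - b)" by (rule dv_sq)
    then show ?thesis using R_uniq[OF that(1) that(2)] by blast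
  qed
  have fR: "?f a \<in> R \<and> dv 1 (a * a - ?f a)" if "a \<in> R" for a
  proof -
    have "a * a \<in> Oi" using that R_O O_mult by auto
    then show ?thesis using rep[of "a * a" 1] Rn1 by simp
  qed
  have inj: "inj_on ?f R"
  proof (rule inj_onI)
    fix a b assume ab: "a \<in> R" "b \<in> R" "?f a = ?f b"
    have h1: "dv 1 (a * a - ?f a)" using fR ab by blast
    have h2: "dv 1 (b * b - ?f a)" using fR ab by simp
    have "dv 1 (a * a - b * b)" using dv_trans[OF h1 dv_sym[OF h2]] .
    then show "a = b" using sq[OF ab(1) ab(2)] by blast
  qed
  have sub: "?f ` R \<subseteq> R" using fR by blast
  have im: "?f ` R = R" using endo_inj_surj[OF R_fin sub inj] .
  obtain r where r: "r \<in> R" "dv 1 (s - r)" using R_ex s by blast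
  have "r \<in> ?f ` R" using im r(1) by simp
  then obtain a where a: "a \<in> R" "?f a = r" by (auto simp del: rep_def)
  have "dv 1 (a * a - r)" using fR[OF a(1)] a(2) by simp
  then have a1: "dv 1 (a * a - s)" using dv_trans[OF _ dv_sym[OF r(2)]] by blast
  have u: "b = a" if "b \<in> R" "dv 1 (b * b - s)" for b
  proof -
    have "dv 1 (b * b - a * a)" using dv_trans[OF that(2) dv_sym[OF a1]] .
    then show ?thesis using sq[OF that(1) a(1)] by blast
  qed
  have "{b\<in>R. dv 1 (b * b - s)} = {a}" using u a a1 by blast
  then show ?thesis using card_ind[OF R_fin, of "\<lambda>b. dv 1 (b * b - s)"] by simp
qed

lemma scale1:
  assumes b: "b \<in> Oi" "\<not> dv 1 b" and F: "invf 1 (F :: 'k \<Rightarrow> nat)"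
  shows "(\<Sum>x\<in>R. F (x * b)) = (\<Sum>x\<in>R. F x)"
proof -
  let ?f = "\<lambda>x. rep 1 (x * b)"
  have fR: "?f x \<in> R \<and> dv 1 (x * b - ?f x)" if "x \<in> R" for x
  proof -
    have "x * b \<in> Oi" using that R_O O_mult b by auto
    then show ?thesis using rep[of "x * b" 1] Rn1 by simp
  qed
  have inj: "inj_on ?f R"
  proof (rule inj_onI)
    fix x y assume xy: "x \<in> R" "y \<in> R" "?f x = ?f y"
    have h1: "dv 1 (x * b - ?f x)" using fR xy by blast
    have h2: "dv 1 (y * b - ?f x)" using fR xy by simp
    have "dv 1 (x * b - y * b)" using dv_trans[OF h1 dv_sym[OF h2]] .
    then have "dv 1 (b * (x - y))" by (simp add: algebra_simps)
    then have "dv 1 (x - y)" using dv_unit_mult b by blast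
    then show "x = y" using R_uniq xy by blast
  qed
  have sub: "?f ` R \<subseteq> R" using fR by blast
  have im: "?f ` R = R" using endo_inj_surj[OF R_fin sub inj] .
  have "(\<Sum>x\<in>R. F (x * b)) = (\<Sum>x\<in>R. F (?f x))"
  proof (rule sum.cong[OF refl])
    fix x assume x: "x \<in> R"
    have o: "x * b \<in> Oi" "?f x \<in> Oi" using x fR R_O b O_mult by auto
    have "dv 1 (x * b - ?f x)" using fR[OF x] by blast
    then show "F (x * b) = F (?f x)" using F o unfolding invf_def by blast
  qed
  also have "\<dots> = sum F (?f ` R)" using sum.reindex[OF inj, of F] by simp
  finally show ?thesis using im by simp
qed

end


context lfu begin

declare Rn.simps(2)[simp del]

lemma Rn1': "Rn (Suc 0) = R" using Rn1 by simp

lemma dv_shift: "dv n d \<Longrightarrow> dv n (a + d) \<longleftrightarrow> dv n a"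
proof
  assume "dv n d" "dv n (a + d)"
  then have "dv n ((a + d) - d)" using dv_diff by blast
  then show "dv n a" by simp
qed (rule dv_add)

lemma invf_dv:
  assumes "\<And>x y. x \<in> Oi \<Longrightarrow> y \<in> Oi \<Longrightarrow> \<exists>H\<in>Oi. F x - F y = (x - y) * H"
  shows "invf n (\<lambda>x. ind (dv n (F x - \<rho>)))"
  unfolding invf_def
proof (intro ballI impI)
  fix x y assume xy: "x \<in> Oi" "y \<in> Oi" "dv n (x - y)"
  obtain H where H: "H \<in> Oi" "F x - F y = (x - y) * H" using assms xy by blast
  have d: "dv n (F x - F y)" using dv_multO[OF xy(3) H(1)] H(2) by simp
  have e: "F x - \<rho> = (F y - \<rho>) + (F x - F y)" by simp
  have "dv n ((F y - \<rho>) + (F x - F y)) \<longleftrightarrow> dv n (F y - \<rho>)" by (rule dv_shift[OF d])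
  then have "dv n (F x - \<rho>) \<longleftrightarrow> dv n (F y - \<rho>)" by (subst e)
  then show "ind (dv n (F x - \<rho>)) = ind (dv n (F y - \<rho>))" by simp
qed

lemma uni: "g \<in> Oi \<Longrightarrow> \<not> dv 1 g \<Longrightarrow> inverse g \<in> Oi" using unit_inv by blast

lemma MP1:
  assumes s: "s \<in> Oi" "\<not> dv 1 s"
  shows "S2 R R (\<lambda>a b. dv 1 (phi a b - s)) = q + 1"
proof -
  let ?P = "\<lambda>a b. dv 1 (phi a b - s)"
  have "S2 R R ?P = (\<Sum>b\<in>R. \<Sum>a\<in>R. ind (?P a b))" unfolding S2_def by (rule sum.swap)
  also have "\<dots> = (\<Sum>a\<in>R. ind (?P a 0)) + (\<Sum>b\<in>R - {0}. \<Sum>a\<in>R. ind (?P a b))"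
    using sum.remove[OF R_fin R_0] by blast
  also have "(\<Sum>a\<in>R. ind (?P a 0)) = 1" using sqrt1[OF s(1)] by (simp add: phi_def)
  also have "(\<Sum>b\<in>R - {0}. \<Sum>a\<in>R. ind (?P a b))
      = (\<Sum>b\<in>R - {0}. \<Sum>a\<in>R. ind (dv 1 (b * b * (a * a + a - u) - s)))"
  proof (rule sum.cong[OF refl])
    fix b assume b: "b \<in> R - {0}"
    have bO: "b \<in> Oi" "\<not> dv 1 b" using b R_O R_dv1 by auto
    have inv: "invf 1 (\<lambda>a. ind (dv 1 (phi a b - s)))"
    proof (rule invf_dv)
      fix x y assume "x \<in> Oi" "y \<in> Oi"
      then have "x + y + b \<in> Oi" using bO by (intro O_add)
      moreover have "phi x b - phi y b = (x - y) * (x + y + b)" by (simp add: phi_def algebra_simps)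
      ultimately show "\<exists>H\<in>Oi. phi x b - phi y b = (x - y) * H" by blast
    qed
    have "(\<Sum>a\<in>R. ind (?P a b)) = (\<Sum>a\<in>R. ind (?P (a * b) b))"
      using scale1[OF bO inv] by simp
    also have "\<dots> = (\<Sum>a\<in>R. ind (dv 1 (b * b * (a * a + a - u) - s)))"
    proof (rule sum.cong[OF refl])
      fix a show "ind (?P (a * b) b) = ind (dv 1 (b * b * (a * a + a - u) - s))"
        by (simp add: phi_def algebra_simps)
    qed
    finally show "(\<Sum>a\<in>R. ind (?P a b)) = (\<Sum>a\<in>R. ind (dv 1 (b * b * (a * a + a - u) - s)))" .
  qed
  also have "\<dots> = (\<Sum>a\<in>R. \<Sum>b\<in>R - {0}. ind (dv 1 (b * b * (a * a + a - u) - s)))"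
    by (rule sum.swap)
  also have "\<dots> = (\<Sum>a\<in>R. 1)"
  proof (rule sum.cong[OF refl])
    fix a assume a: "a \<in> R"
    let ?g = "a * a + a - u"
    have aO: "a \<in> Oi" using a R_O by auto
    have gO: "?g \<in> Oi" using aO uO by (intro O_add O_diff O_mult)
    have gu: "\<not> dv 1 ?g" using anis[OF aO] .
    have gi: "inverse ?g \<in> Oi" "?g \<noteq> 0" using unit_inv[OF gO gu] by auto
    have "(\<Sum>b\<in>R. ind (dv 1 (b * b * ?g - s))) = ind (dv 1 (0 * 0 * ?g - s)) + (\<Sum>b\<in>R - {0}. ind (dv 1 (b * b * ?g - s)))"
      using sum.remove[OF R_fin R_0] by blast
    moreover have "\<not> dv 1 (0 * 0 * ?g - s)" using s(2) dv_neg by simp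
    ultimately have e1: "(\<Sum>b\<in>R - {0}. ind (dv 1 (b * b * ?g - s))) = (\<Sum>b\<in>R. ind (dv 1 (b * b * ?g - s)))"
      by (simp add: ind_def)
    have "(\<Sum>b\<in>R. ind (dv 1 (b * b * ?g - s))) = (\<Sum>b\<in>R. ind (dv 1 (b * b - s * inverse ?g)))"
    proof (rule sum.cong[OF refl])
      fix b
      have "?g * (b * b - s * inverse ?g) = b * b * ?g - (?g * inverse ?g) * s" by (simp add: algebra_simps)
      moreover have "?g * inverse ?g = 1" using gi by simp
      ultimately have "b * b * ?g - s = ?g * (b * b - s * inverse ?g)" by simp
      then show "ind (dv 1 (b * b * ?g - s)) = ind (dv 1 (b * b - s * inverse ?g))"
        using dv_unit_mult[OF gO gu] by simp
    qed
    also have "\<dots> = 1" using sqrt1 O_mult[OF s(1) gi(1)] by blast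
    finally show "(\<Sum>b\<in>R - {0}. ind (dv 1 (b * b * ?g - s))) = 1" using e1 by simp
  qed
  also have "\<dots> = q" using R_card by simp
  finally show ?thesis by simp
qed

lemma S2_lift:
  "S2 (Rn (Suc n)) (Rn (Suc n)) P =
   (\<Sum>a\<in>Rn n. \<Sum>b\<in>Rn n. \<Sum>r1\<in>R. \<Sum>r2\<in>R. ind (P (a + 2 ^ n * r1) (b + 2 ^ n * r2)))"
proof -
  have "S2 (Rn (Suc n)) (Rn (Suc n)) P =
     (\<Sum>a\<in>Rn n. \<Sum>r1\<in>R. \<Sum>b\<in>Rn n. \<Sum>r2\<in>R. ind (P (a + 2 ^ n * r1) (b + 2 ^ n * r2)))"
    unfolding S2_def by (simp only: sum_lift1)
  also have "\<dots> = (\<Sum>a\<in>Rn n. \<Sum>b\<in>Rn n. \<Sum>r1\<in>R. \<Sum>r2\<in>R. ind (P (a + 2 ^ n * r1) (b + 2 ^ n * r2)))"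
    by (rule sum.cong[OF refl], rule sum.swap)
  finally show ?thesis .
qed

lemma ind_zero_sum: "(\<And>x. x \<in> A \<Longrightarrow> \<not> P x) \<Longrightarrow> (\<Sum>x\<in>A. ind (P x)) = 0"
  by (simp add: ind_def)

lemma MP_inner:
  assumes n: "1 \<le> n" and s: "s \<in> Oi" "\<not> dv 1 s" and ab: "a \<in> Oi" "b \<in> Oi"
  shows "(\<Sum>r1\<in>R. \<Sum>r2\<in>R. ind (dv (Suc n) (phi (a + 2 ^ n * r1) (b + 2 ^ n * r2) - s)))
        = q * ind (dv n (phi a b - s))"
proof -
  let ?h = "(2::'k) ^ n"
  have hO: "?h \<in> Oi" by (intro O_pow O_2)
  have key: "phi (a + ?h * r1) (b + ?h * r2) - s = (phi a b - s) + ?h * ((b * r1 + a * r2) + 2 * (a * r1 - u * b * r2) + ?h * phi r1 r2)"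
    for r1 r2 by (simp add: phi_def algebra_simps)
  have rest1: "dv 1 (2 * (a * r1 - u * b * r2) + ?h * phi r1 r2)" if "r1 \<in> R" "r2 \<in> R" for r1 r2
  proof -
    have o: "r1 \<in> Oi" "r2 \<in> Oi" using that R_O by auto
    have m: "a * r1 - u * b * r2 \<in> Oi" using o ab uO by (intro O_diff O_mult)
    have d1: "dv 1 (2 * (a * r1 - u * b * r2))" using dv_2pow_mult[OF m, of 1] by (simp only: power_one_right)
    have "phi r1 r2 \<in> Oi" using o uO unfolding phi_def by (intro O_diff O_add O_mult)
    then have "dv n (?h * phi r1 r2)" using dv_2pow_mult by blast
    then have "dv 1 (?h * phi r1 r2)" using dv_mono n by blast
    then show ?thesis using dv_add d1 by blast
  qed
  show ?thesis
  proof (cases "dv n (phi a b - s)")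
    case False
    have "\<not> dv (Suc n) (phi (a + ?h * r1) (b + ?h * r2) - s)" if "r1 \<in> R" "r2 \<in> R" for r1 r2
    proof
      assume h: "dv (Suc n) (phi (a + ?h * r1) (b + ?h * r2) - s)"
      have o: "r1 \<in> Oi" "r2 \<in> Oi" using that R_O by auto
      have "(b * r1 + a * r2) + 2 * (a * r1 - u * b * r2) + ?h * phi r1 r2 \<in> Oi"
        using o ab uO hO unfolding phi_def by (intro O_add O_diff O_mult O_2)
      then have d: "dv n (?h * ((b * r1 + a * r2) + 2 * (a * r1 - u * b * r2) + ?h * phi r1 r2))"
        using dv_2pow_mult by blast
      have "dv n (phi (a + ?h * r1) (b + ?h * r2) - s)" using h dv_mono by fastforce
      then have "dv n ((phi a b - s) + ?h * ((b * r1 + a * r2) + 2 * (a * r1 - u * b * r2) + ?h * phi r1 r2))"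
        using key by simp
      then show False using dv_shift[OF d] False by blast
    qed
    then show ?thesis using False by (simp add: ind_def)
  next
    case True
    obtain e where e: "e \<in> Oi" "phi a b - s = ?h * e" using dvn_E[OF True] by blast
    have eq: "dv (Suc n) (phi (a + ?h * r1) (b + ?h * r2) - s) \<longleftrightarrow> dv 1 (e + b * r1 + a * r2)"
      if "r1 \<in> R" "r2 \<in> R" for r1 r2
    proof -
      have "phi (a + ?h * r1) (b + ?h * r2) - s = ?h * ((e + b * r1 + a * r2) + (2 * (a * r1 - u * b * r2) + ?h * phi r1 r2))"
        unfolding key[of r1 r2] e(2) by (simp add: algebra_simps)
      then have "dv (Suc n) (phi (a + ?h * r1) (b + ?h * r2) - s) \<longleftrightarrow> dv 1 ((e + b * r1 + a * r2) + (2 * (a * r1 - u * b * r2) + ?h * phi r1 r2))"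
        using dv_2pow_mult_iff[of 1 n] by simp
      then show ?thesis using dv_shift[OF rest1[OF that]] by simp
    qed
    have nb: "\<not> (dv 1 a \<and> dv 1 b)"
    proof
      assume ab1: "dv 1 a \<and> dv 1 b"
      have "dv 1 (a * a)" "dv 1 (a * b)" "dv 1 (u * b * b)"
        using ab1 ab uO dv_multO dv_multO' O_mult by auto
      then have p: "dv 1 (phi a b)" unfolding phi_def using dv_add dv_diff by blast
      have "dv 1 (phi a b - s)" using True dv_mono n by blast
      then have "dv 1 (phi a b - (phi a b - s))" using dv_diff p by blast
      then show False using s(2) by simp
    qed
    have "(\<Sum>r1\<in>R. \<Sum>r2\<in>R. ind (dv (Suc n) (phi (a + ?h * r1) (b + ?h * r2) - s)))
        = (\<Sum>r1\<in>R. \<Sum>r2\<in>R. ind (dv 1 (e + b * r1 + a * r2)))"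
      using eq by (intro sum.cong refl) simp
    also have "\<dots> = q"
    proof (cases "dv 1 a")
      case False
      have "(\<Sum>r2\<in>R. ind (dv 1 (e + b * r1 + a * r2))) = 1" if "r1 \<in> R" for r1
      proof -
        have "e + b * r1 \<in> Oi" using e ab that R_O by (auto intro!: O_add O_mult)
        then show ?thesis using ind_hensel[OF _ ab(1) False] by blast
      qed
      then show ?thesis using R_card by simp
    next
      case True
      then have bu: "\<not> dv 1 b" using nb by blast
      have "(\<Sum>r1\<in>R. \<Sum>r2\<in>R. ind (dv 1 (e + b * r1 + a * r2))) = (\<Sum>r2\<in>R. \<Sum>r1\<in>R. ind (dv 1 (e + b * r1 + a * r2)))"
        by (rule sum.swap)
      also have "\<dots> = (\<Sum>r2\<in>R. 1)"
      proof (rule sum.cong[OF refl])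
        fix r2 assume r2: "r2 \<in> R"
        have "e + a * r2 \<in> Oi" using e ab r2 R_O by (auto intro!: O_add O_mult)
        then have "(\<Sum>r1\<in>R. ind (dv 1 ((e + a * r2) + b * r1))) = 1" using ind_hensel[OF _ ab(2) bu] by blast
        moreover have "(\<lambda>r1. e + b * r1 + a * r2) = (\<lambda>r1. (e + a * r2) + b * r1)" by (simp add: algebra_simps fun_eq_iff)
        ultimately show "(\<Sum>r1\<in>R. ind (dv 1 (e + b * r1 + a * r2))) = 1" by metis
      qed
      finally show ?thesis using R_card by simp
    qed
    finally show ?thesis using True by (simp add: ind_def)
  qed
qed

lemma MP_step:
  assumes n: "1 \<le> n" and s: "s \<in> Oi" "\<not> dv 1 s"
  shows "S2 (Rn (Suc n)) (Rn (Suc n)) (\<lambda>a b. dv (Suc n) (phi a b - s)) = q * S2 (Rn n) (Rn n) (\<lambda>a b. dv n (phi a b - s))"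
proof -
  have "S2 (Rn (Suc n)) (Rn (Suc n)) (\<lambda>a b. dv (Suc n) (phi a b - s))
      = (\<Sum>a\<in>Rn n. \<Sum>b\<in>Rn n. q * ind (dv n (phi a b - s)))"
    unfolding S2_lift using MP_inner[OF n s] Rn_O by (intro sum.cong refl) blast
  also have "\<dots> = q * S2 (Rn n) (Rn n) (\<lambda>a b. dv n (phi a b - s))"
    by (simp add: S2_def sum_distrib_left)
  finally show ?thesis .
qed

lemma MP_formula:
  assumes s: "s \<in> Oi" "\<not> dv 1 s"
  shows "S2 (Rn (Suc m)) (Rn (Suc m)) (\<lambda>a b. dv (Suc m) (phi a b - s)) = q ^ m * (q + 1)"
proof (induction m)
  case 0
  then show ?case using MP1[OF s] Rn1 by simp
next
  case (Suc m)
  then show ?case using MP_step[OF _ s, of "Suc m"] by (simp add: algebra_simps)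
qed

end


context lfu begin

definition NG :: "nat \<Rightarrow> 'k \<Rightarrow> nat" where
  "NG n \<rho> = S2 (Rn n) (Rn n) (\<lambda>a c. dv n (G a c - \<rho>))"

lemma dv2x: "x \<in> Oi \<Longrightarrow> dv 1 (2 * x)"
  using dv_2pow_mult[of x 1] by (simp only: power_one_right)

lemma G_dv1: "a \<in> Oi \<Longrightarrow> c \<in> Oi \<Longrightarrow> dv 1 (G a c - \<rho>) \<longleftrightarrow> dv 1 (a * a - \<rho>)"
proof -
  assume o: "a \<in> Oi" "c \<in> Oi"
  have "a * c - 2 * u * c * c \<in> Oi" using o uO by (intro O_diff O_mult O_2)
  then have d: "dv 1 (2 * (a * c - 2 * u * c * c))" by (rule dv2x)
  have e: "G a c - \<rho> = (a * a - \<rho>) + 2 * (a * c - 2 * u * c * c)" by (simp add: G_def algebra_simps)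
  have "dv 1 ((a * a - \<rho>) + 2 * (a * c - 2 * u * c * c)) \<longleftrightarrow> dv 1 (a * a - \<rho>)" by (rule dv_shift[OF d])
  then show ?thesis by (subst e)
qed

lemma G_a_dv1: "a \<in> Oi \<Longrightarrow> c \<in> Oi \<Longrightarrow> dv 1 (G a c) \<Longrightarrow> dv 1 a"
proof -
  assume "a \<in> Oi" "c \<in> Oi" "dv 1 (G a c)"
  then have "dv 1 (a * a)" using G_dv1[of a c 0] by simp
  then show "dv 1 a" by (rule dv_sq)
qed

lemma G_2: "G (2 * y) c = 4 * phi y c"
  by (simp add: G_def phi_def algebra_simps)

lemma G_22: "G (2 * y1) (2 * y2) = 4 * G y1 y2"
  by (simp add: G_def algebra_simps)

lemma four: "(2::'k) ^ 2 = 4" by simp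

lemma dv_4_iff: "dv (n + 2) (4 * x) \<longleftrightarrow> dv n x"
  using dv_2pow_mult_iff[of n 2 x] by (simp only: four)

lemma phi_dv1: "a \<in> Oi \<Longrightarrow> c \<in> Oi \<Longrightarrow> dv 1 (phi a c) \<Longrightarrow> dv 1 c"
proof (rule ccontr)
  assume o: "a \<in> Oi" "c \<in> Oi" and d: "dv 1 (phi a c)" and nc: "\<not> dv 1 c"
  have ci: "inverse c \<in> Oi" "c \<noteq> 0" using unit_inv[OF o(2) nc] by auto
  let ?r = "a * inverse c"
  have rO: "?r \<in> Oi" using o ci O_mult by blast
  have "phi a c = (c * c) * (?r * ?r + ?r - u)" using ci by (simp add: phi_def field_simps)
  moreover have cc: "c * c \<in> Oi" using o O_mult by blast
  moreover have ncc: "\<not> dv 1 (c * c)" using nc dv_sq by blast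
  ultimately have "dv 1 ((c * c) * (?r * ?r + ?r - u))" using d by simp
  then have "dv 1 (?r * ?r + ?r - u)" using dv_unit_mult[OF cc ncc] by blast
  then show False using anis[OF rO] by blast
qed

lemma G_dv3: "a \<in> Oi \<Longrightarrow> c \<in> Oi \<Longrightarrow> dv 3 (G a c) \<Longrightarrow> dv 1 a \<and> dv 1 c"
proof -
  assume o: "a \<in> Oi" "c \<in> Oi" and d: "dv 3 (G a c)"
  have "dv 1 (G a c)" using d dv_mono by fastforce
  then have a1: "dv 1 a" using G_a_dv1 o by blast
  obtain a' where a': "a' \<in> Oi" "a = 2 * a'" using dv1_E[OF a1] by blast
  have h: "dv 3 (4 * phi a' c)" using d a' G_2 by simp
  have "(3::nat) = 1 + 2" by simp
  then have "dv (1 + 2) (4 * phi a' c)" using h by metis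
  then have "dv 1 (phi a' c)" using dv_4_iff by blast
  then have "dv 1 c" using phi_dv1 a' o by blast
  then show ?thesis using a1 by blast
qed

lemma invf_mono: "invf m F \<Longrightarrow> m \<le> k \<Longrightarrow> invf k F"
  unfolding invf_def using dv_mono by blast

lemma G_inv_a: "c \<in> Oi \<Longrightarrow> invf n (\<lambda>a. ind (dv n (G a c - \<rho>)))"
proof (rule invf_dv)
  fix x y assume "c \<in> Oi" "x \<in> Oi" "y \<in> Oi"
  then have "x + y + 2 * c \<in> Oi" by (intro O_add O_mult O_2)
  moreover have "G x c - G y c = (x - y) * (x + y + 2 * c)" by (simp add: G_def algebra_simps)
  ultimately show "\<exists>H\<in>Oi. G x c - G y c = (x - y) * H" by blast
qed

lemma G_inv_c: "a \<in> Oi \<Longrightarrow> invf n (\<lambda>c. ind (dv n (G a c - \<rho>)))"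
proof (rule invf_dv)
  fix x y assume "a \<in> Oi" "x \<in> Oi" "y \<in> Oi"
  then have "2 * a - 4 * u * (x + y) \<in> Oi" using uO O_pow[OF O_2, of 2] by (intro O_add O_diff O_mult O_2) (auto simp: four)
  moreover have "G a x - G a y = (x - y) * (2 * a - 4 * u * (x + y))" by (simp add: G_def algebra_simps)
  ultimately show "\<exists>H\<in>Oi. G a x - G a y = (x - y) * H" by blast
qed

lemma phi_inv_a: "c \<in> Oi \<Longrightarrow> invf n (\<lambda>a. ind (dv n (phi a c - \<rho>)))"
proof (rule invf_dv)
  fix x y assume "c \<in> Oi" "x \<in> Oi" "y \<in> Oi"
  then have "x + y + c \<in> Oi" by (intro O_add)
  moreover have "phi x c - phi y c = (x - y) * (x + y + c)" by (simp add: phi_def algebra_simps)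
  ultimately show "\<exists>H\<in>Oi. phi x c - phi y c = (x - y) * H" by blast
qed

lemma phi_inv_c: "a \<in> Oi \<Longrightarrow> invf n (\<lambda>c. ind (dv n (phi a c - \<rho>)))"
proof (rule invf_dv)
  fix x y assume "a \<in> Oi" "x \<in> Oi" "y \<in> Oi"
  then have "a - u * (x + y) \<in> Oi" using uO by (intro O_add O_diff O_mult)
  moreover have "phi a x - phi a y = (x - y) * (a - u * (x + y))" by (simp add: phi_def algebra_simps)
  ultimately show "\<exists>H\<in>Oi. phi a x - phi a y = (x - y) * H" by blast
qed

lemma S2_lift_inv:
  assumes "\<And>c. c \<in> Oi \<Longrightarrow> invf m (\<lambda>a. ind (P a c))" "\<And>a. a \<in> Oi \<Longrightarrow> invf m (\<lambda>c. ind (P a c))"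
  shows "S2 (Rn (Suc m)) (Rn (Suc m)) P = q * q * S2 (Rn m) (Rn m) P"
proof -
  have "S2 (Rn (Suc m)) (Rn (Suc m)) P = (\<Sum>a\<in>Rn (Suc m). q * (\<Sum>c\<in>Rn m. ind (P a c)))"
    unfolding S2_def
  proof (rule sum.cong[OF refl])
    fix a assume "a \<in> Rn (Suc m)"
    then have "a \<in> Oi" using Rn_O by blast
    then show "(\<Sum>c\<in>Rn (Suc m). ind (P a c)) = q * (\<Sum>c\<in>Rn m. ind (P a c))"
      using sum_lift_inv assms(2) by blast
  qed
  also have "\<dots> = q * (\<Sum>a\<in>Rn (Suc m). (\<Sum>c\<in>Rn m. ind (P a c)))" by (simp add: sum_distrib_left)
  also have "(\<Sum>a\<in>Rn (Suc m). (\<Sum>c\<in>Rn m. ind (P a c))) = q * (\<Sum>a\<in>Rn m. (\<Sum>c\<in>Rn m. ind (P a c)))"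
  proof (rule sum_lift_inv)
    show "invf m (\<lambda>a. \<Sum>c\<in>Rn m. ind (P a c))"
      unfolding invf_def
    proof (intro ballI impI)
      fix x y assume xy: "x \<in> Oi" "y \<in> Oi" "dv m (x - y)"
      show "(\<Sum>c\<in>Rn m. ind (P x c)) = (\<Sum>c\<in>Rn m. ind (P y c))"
      proof (rule sum.cong[OF refl])
        fix c assume "c \<in> Rn m"
        then have "c \<in> Oi" using Rn_O by blast
        then show "ind (P x c) = ind (P y c)" using assms(1) xy unfolding invf_def by blast
      qed
    qed
  qed
  finally show ?thesis by (simp add: S2_def)
qed

lemma sum_single0: "(\<And>r. r \<in> R \<Longrightarrow> r \<noteq> 0 \<Longrightarrow> F r = (0::nat)) \<Longrightarrow> (\<Sum>r\<in>R. F r) = F 0"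
proof -
  assume h: "\<And>r. r \<in> R \<Longrightarrow> r \<noteq> 0 \<Longrightarrow> F r = 0"
  have "(\<Sum>r\<in>R. F r) = F 0 + (\<Sum>r\<in>R - {0}. F r)" using sum.remove[OF R_fin R_0] by blast
  moreover have "(\<Sum>r\<in>R - {0}. F r) = 0" using h by (intro sum.neutral) blast
  ultimately show ?thesis by simp
qed

end


context lfu begin

lemma NG_1_base: "NG 1 1 = q"
proof -
  have "NG 1 1 = (\<Sum>a\<in>R. \<Sum>c\<in>R. ind (dv 1 (a * a - 1)))"
    unfolding NG_def S2_def Rn1
  proof (intro sum.cong refl)
    fix a c assume "a \<in> R" "c \<in> R"
    then have "a \<in> Oi" "c \<in> Oi" using R_O by auto
    then show "ind (dv 1 (G a c - 1)) = ind (dv 1 (a * a - 1))" using G_dv1[of a c 1] by simp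
  qed
  also have "\<dots> = (\<Sum>a\<in>R. q * ind (dv 1 (a * a - 1)))" using R_card by simp
  also have "\<dots> = q * (\<Sum>a\<in>R. ind (dv 1 (a * a - 1)))" by (simp add: sum_distrib_left)
  also have "\<dots> = q" using sqrt1[OF O_1] by simp
  finally show ?thesis .
qed

lemma G_hensel_inner:
  assumes o: "a \<in> Oi" "c \<in> Oi"
  shows "(\<Sum>r\<in>R. ind (dv (Suc (Suc m)) (G a (c + 2 ^ m * r) - 1))) = ind (dv (Suc m) (G a c - 1))"
proof -
  let ?k = "(2::'k) ^ Suc m"
  have key: "G a (c + 2 ^ m * r) - 1 = (G a c - 1) + ?k * (a * r - 4 * u * c * r - ?k * u * r * r)" for r
    by (simp add: G_def algebra_simps)
  have kO: "?k \<in> Oi" by (intro O_pow O_2)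
  have XO: "a * r - 4 * u * c * r - ?k * u * r * r \<in> Oi" if "r \<in> R" for r
  proof -
    have "r \<in> Oi" using that R_O by blast
    moreover have "(4::'k) \<in> Oi" using O_pow[OF O_2, of 2] four by simp
    ultimately show ?thesis using o uO kO by (intro O_diff O_mult)
  qed
  show ?thesis
  proof (cases "dv (Suc m) (G a c - 1)")
    case False
    have "\<not> dv (Suc (Suc m)) (G a (c + 2 ^ m * r) - 1)" if r: "r \<in> R" for r
    proof
      assume h: "dv (Suc (Suc m)) (G a (c + 2 ^ m * r) - 1)"
      have d: "dv (Suc m) (?k * (a * r - 4 * u * c * r - ?k * u * r * r))"
        using dv_2pow_mult[OF XO[OF r]] by blast
      have "dv (Suc m) (G a (c + 2 ^ m * r) - 1)" using h dv_mono by fastforce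
      then have "dv (Suc m) ((G a c - 1) + ?k * (a * r - 4 * u * c * r - ?k * u * r * r))"
        unfolding key .
      then show False using dv_shift[OF d] False by blast
    qed
    then show ?thesis using False by (simp add: ind_def)
  next
    case True
    obtain e where e: "e \<in> Oi" "G a c - 1 = ?k * e" using dvn_E[OF True] by blast
    have au: "\<not> dv 1 a"
    proof
      assume "dv 1 a"
      then have "dv 1 (a * a)" using dv_multO o by blast
      moreover have "dv 1 (G a c - 1)" using True dv_mono by fastforce
      then have "dv 1 (a * a - 1)" using G_dv1 o by blast
      ultimately have "dv 1 (a * a - (a * a - 1))" using dv_diff by blast
      then show False using not_dv1_1 by simp
    qed
    have eq: "dv (Suc (Suc m)) (G a (c + 2 ^ m * r) - 1) \<longleftrightarrow> dv 1 (e + a * r)" if r: "r \<in> R" for r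
    proof -
      have rO: "r \<in> Oi" using r R_O by blast
      have "(4::'k) = 2 * 2" by simp
      then have "4 * u * c * r + ?k * u * r * r = 2 * (2 * u * c * r + 2 ^ m * u * r * r)" by (simp add: algebra_simps)
      moreover have "2 * u * c * r + 2 ^ m * u * r * r \<in> Oi" using uO o rO by (intro O_add O_mult O_pow O_2)
      ultimately have d: "dv 1 (- (4 * u * c * r + ?k * u * r * r))" using dv2x dv_neg by metis
      have "G a (c + 2 ^ m * r) - 1 = ?k * ((e + a * r) + - (4 * u * c * r + ?k * u * r * r))"
        unfolding key e(2) by (simp add: algebra_simps)
      then have "dv (Suc (Suc m)) (G a (c + 2 ^ m * r) - 1) \<longleftrightarrow> dv 1 ((e + a * r) + - (4 * u * c * r + ?k * u * r * r))"
        using dv_2pow_mult_iff[of 1 "Suc m"] by simp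
      then show ?thesis using dv_shift[OF d] by simp
    qed
    have "(\<Sum>r\<in>R. ind (dv (Suc (Suc m)) (G a (c + 2 ^ m * r) - 1))) = (\<Sum>r\<in>R. ind (dv 1 (e + a * r)))"
      using eq by (intro sum.cong refl) simp
    also have "\<dots> = 1" using ind_hensel[OF e(1) o(1) au] .
    finally show ?thesis using True by (simp add: ind_def)
  qed
qed

lemma G_inv_c2: "a \<in> Oi \<Longrightarrow> invf m (\<lambda>c. ind (dv (Suc m) (G a c - \<rho>)))"
  unfolding invf_def
proof (intro ballI impI)
  fix x y assume a: "a \<in> Oi" and xy: "x \<in> Oi" "y \<in> Oi" "dv m (x - y)"
  have HO: "a - 2 * u * (x + y) \<in> Oi" using a xy uO by (intro O_add O_diff O_mult O_2)
  have "G a x - G a y = 2 * ((x - y) * (a - 2 * u * (x + y)))" by (simp add: G_def algebra_simps)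
  moreover have "dv (Suc m) (2 * ((x - y) * (a - 2 * u * (x + y))))"
    using dv_Suc_2 dv_multO[OF xy(3) HO] by blast
  ultimately have d: "dv (Suc m) (G a x - G a y)" by simp
  have e: "G a x - \<rho> = (G a y - \<rho>) + (G a x - G a y)" by simp
  have "dv (Suc m) ((G a y - \<rho>) + (G a x - G a y)) \<longleftrightarrow> dv (Suc m) (G a y - \<rho>)" by (rule dv_shift[OF d])
  then show "ind (dv (Suc m) (G a x - \<rho>)) = ind (dv (Suc m) (G a y - \<rho>))" by (subst e) simp
qed

lemma NG_1_step: "NG (Suc (Suc m)) 1 = q * NG (Suc m) 1"
proof -
  let ?n = "Suc m"
  let ?X = "\<Sum>a\<in>Rn ?n. \<Sum>c\<in>Rn m. ind (dv ?n (G a c - 1))"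
  have inner: "(\<Sum>r1\<in>R. \<Sum>r2\<in>R. ind (dv (Suc ?n) (G (a + 2 ^ ?n * r1) (c + 2 ^ ?n * r2) - 1)))
      = q * q * ind (dv (Suc ?n) (G a c - 1))" if ac: "a \<in> Oi" "c \<in> Oi" for a c
  proof -
    have "ind (dv (Suc ?n) (G (a + 2 ^ ?n * r1) (c + 2 ^ ?n * r2) - 1)) = ind (dv (Suc ?n) (G a c - 1))"
      if r: "r1 \<in> R" "r2 \<in> R" for r1 r2
    proof -
      let ?h = "(2::'k) ^ ?n"
      let ?D = "a * r1 + a * r2 + c * r1 + ?h * r1 * r2 - 4 * u * c * r2 + 2 ^ m * (r1 * r1 - 4 * u * r2 * r2)"
      have key: "G (a + ?h * r1) (c + ?h * r2) - 1 = (G a c - 1) + 2 ^ Suc ?n * ?D"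
        by (simp add: G_def algebra_simps)
      have rO: "r1 \<in> Oi" "r2 \<in> Oi" using r R_O by auto
      have f: "(4::'k) \<in> Oi" using O_pow[OF O_2, of 2] four by simp
      have "?D \<in> Oi" using ac rO uO f by (intro O_add O_diff O_mult O_pow O_2)
      then have d: "dv (Suc ?n) (2 ^ Suc ?n * ?D)" by (rule dv_2pow_mult)
      have "dv (Suc ?n) ((G a c - 1) + 2 ^ Suc ?n * ?D) \<longleftrightarrow> dv (Suc ?n) (G a c - 1)" by (rule dv_shift[OF d])
      then show ?thesis unfolding key by simp
    qed
    then have "(\<Sum>r1\<in>R. \<Sum>r2\<in>R. ind (dv (Suc ?n) (G (a + 2 ^ ?n * r1) (c + 2 ^ ?n * r2) - 1)))
        = (\<Sum>r1\<in>R. \<Sum>r2\<in>R. ind (dv (Suc ?n) (G a c - 1)))" by (intro sum.cong refl) simp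
    then show ?thesis using R_card by simp
  qed
  have "NG (Suc ?n) 1 = (\<Sum>a\<in>Rn ?n. \<Sum>c\<in>Rn ?n. q * q * ind (dv (Suc ?n) (G a c - 1)))"
    unfolding NG_def S2_lift using inner Rn_O by (intro sum.cong refl) blast
  also have "\<dots> = q * q * (\<Sum>a\<in>Rn ?n. \<Sum>c\<in>Rn ?n. ind (dv (Suc ?n) (G a c - 1)))"
    by (simp add: sum_distrib_left)
  also have "(\<Sum>a\<in>Rn ?n. \<Sum>c\<in>Rn ?n. ind (dv (Suc ?n) (G a c - 1))) = ?X"
  proof (rule sum.cong[OF refl])
    fix a assume "a \<in> Rn ?n"
    then have aO: "a \<in> Oi" using Rn_O by blast
    have "(\<Sum>c\<in>Rn ?n. ind (dv (Suc ?n) (G a c - 1))) = (\<Sum>c\<in>Rn m. \<Sum>r\<in>R. ind (dv (Suc ?n) (G a (c + 2 ^ m * r) - 1)))"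
      by (rule sum_lift1)
    also have "\<dots> = (\<Sum>c\<in>Rn m. ind (dv ?n (G a c - 1)))"
      using G_hensel_inner[OF aO] Rn_O by (intro sum.cong refl) blast
    finally show "(\<Sum>c\<in>Rn ?n. ind (dv (Suc ?n) (G a c - 1))) = (\<Sum>c\<in>Rn m. ind (dv ?n (G a c - 1)))" .
  qed
  finally have A: "NG (Suc ?n) 1 = q * q * ?X" .
  have "NG ?n 1 = (\<Sum>a\<in>Rn ?n. q * (\<Sum>c\<in>Rn m. ind (dv ?n (G a c - 1))))"
    unfolding NG_def S2_def
  proof (rule sum.cong[OF refl])
    fix a assume "a \<in> Rn ?n"
    then have aO: "a \<in> Oi" using Rn_O by blast
    show "(\<Sum>c\<in>Rn ?n. ind (dv ?n (G a c - 1))) = q * (\<Sum>c\<in>Rn m. ind (dv ?n (G a c - 1)))"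
      using sum_lift_inv[OF G_inv_c2[OF aO]] .
  qed
  also have "\<dots> = q * ?X" by (simp add: sum_distrib_left)
  finally show ?thesis using A by simp
qed

lemma NG_1: "NG (Suc m) 1 = q ^ Suc m"
proof (induction m)
  case 0 then show ?case using NG_1_base by simp
next
  case (Suc m) then show ?case using NG_1_step by simp
qed

end


context lfu begin

lemma dv1_r2y: "r \<in> R \<Longrightarrow> y \<in> Oi \<Longrightarrow> dv 1 (r + 2 * y) \<Longrightarrow> r = 0"
proof -
  assume a: "r \<in> R" "y \<in> Oi" "dv 1 (r + 2 * y)"
  have "dv 1 ((r + 2 * y) - 2 * y)" using dv_diff[OF a(3) dv2x[OF a(2)]] .
  then show "r = 0" using R_dv1 a(1) by simp
qed

lemma sum_even:
  assumes "\<And>r y. r \<in> R \<Longrightarrow> y \<in> Rn m \<Longrightarrow> r \<noteq> 0 \<Longrightarrow> F (r + 2 * y) = (0::nat)"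
  shows "(\<Sum>a\<in>Rn (Suc m). F a) = (\<Sum>y\<in>Rn m. F (2 * y))"
proof -
  have "(\<Sum>a\<in>Rn (Suc m). F a) = (\<Sum>r\<in>R. \<Sum>y\<in>Rn m. F (r + 2 * y))" by (rule sum_lift2)
  also have "\<dots> = (\<Sum>y\<in>Rn m. F (0 + 2 * y))"
    by (rule sum_single0) (use assms in simp)
  finally show ?thesis by simp
qed

lemma NG_red:
  assumes rho: "\<rho> \<in> Oi" "dv 1 \<rho>"
  shows "NG (Suc (Suc (Suc n))) (4 * \<rho>) = q * q * NG (Suc n) \<rho>"
proof -
  let ?N = "Suc (Suc (Suc n))"
  let ?P = "\<lambda>a c. dv ?N (G a c - 4 * \<rho>)"
  have d3: "dv 3 (4 * \<rho>)" using dv_4_iff[of 1 \<rho>] rho(2) by (simp add: numeral_3_eq_3)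
  have P13: "dv 1 a \<and> dv 1 c" if "a \<in> Oi" "c \<in> Oi" "?P a c" for a c
  proof -
    have "dv 3 (G a c - 4 * \<rho>)" using that(3) dv_mono by fastforce
    then have "dv 3 ((G a c - 4 * \<rho>) + 4 * \<rho>)" using dv_add d3 by blast
    then show ?thesis using G_dv3 that by simp
  qed
  have "NG ?N (4 * \<rho>) = (\<Sum>y1\<in>Rn (Suc (Suc n)). \<Sum>c\<in>Rn ?N. ind (?P (2 * y1) c))"
    unfolding NG_def S2_def
  proof (rule sum_even)
    fix r y assume ry: "r \<in> R" "y \<in> Rn (Suc (Suc n))" "r \<noteq> 0"
    have o: "r + 2 * y \<in> Oi" "y \<in> Oi" using ry R_O Rn_O by (auto intro!: O_add O_mult O_2)
    show "(\<Sum>c\<in>Rn ?N. ind (?P (r + 2 * y) c)) = 0"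
    proof (rule ind_zero_sum)
      fix c assume "c \<in> Rn ?N"
      then have "c \<in> Oi" using Rn_O by blast
      then show "\<not> ?P (r + 2 * y) c" using P13 o dv1_r2y ry by blast
    qed
  qed
  also have "\<dots> = (\<Sum>y1\<in>Rn (Suc (Suc n)). \<Sum>y2\<in>Rn (Suc (Suc n)). ind (?P (2 * y1) (2 * y2)))"
  proof (rule sum.cong[OF refl])
    fix y1 assume y1: "y1 \<in> Rn (Suc (Suc n))"
    then have o1: "2 * y1 \<in> Oi" using Rn_O by (auto intro!: O_mult O_2)
    show "(\<Sum>c\<in>Rn ?N. ind (?P (2 * y1) c)) = (\<Sum>y2\<in>Rn (Suc (Suc n)). ind (?P (2 * y1) (2 * y2)))"
    proof (rule sum_even)
      fix r y assume ry: "r \<in> R" "y \<in> Rn (Suc (Suc n))" "r \<noteq> 0"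
      have o: "r + 2 * y \<in> Oi" "y \<in> Oi" using ry R_O Rn_O by (auto intro!: O_add O_mult O_2)
      show "ind (?P (2 * y1) (r + 2 * y)) = 0"
        using P13[OF o1 o(1)] dv1_r2y[OF ry(1) o(2)] ry(3) by (auto simp: ind_def)
    qed
  qed
  also have "\<dots> = S2 (Rn (Suc (Suc n))) (Rn (Suc (Suc n))) (\<lambda>a c. dv (Suc n) (G a c - \<rho>))"
    unfolding S2_def
  proof (intro sum.cong refl)
    fix y1 y2
    have e: "G (2 * y1) (2 * y2) - 4 * \<rho> = 4 * (G y1 y2 - \<rho>)" unfolding G_22 by (simp add: right_diff_distrib)
    show "ind (?P (2 * y1) (2 * y2)) = ind (dv (Suc n) (G y1 y2 - \<rho>))"
      by (subst e) (simp only: dv_4_iff[of "Suc n", simplified])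
  qed
  also have "\<dots> = q * q * NG (Suc n) \<rho>"
    unfolding NG_def
    by (rule S2_lift_inv[where P="\<lambda>a c. dv (Suc n) (G a c - \<rho>)" and m="Suc n"]) (simp_all add: G_inv_a G_inv_c)
  finally show ?thesis .
qed

lemma NG_0_1: "NG 1 0 = q"
proof -
  have "NG 1 0 = (\<Sum>a\<in>R. \<Sum>c\<in>R. ind (dv 1 (a * a - 0)))"
    unfolding NG_def S2_def Rn1
  proof (intro sum.cong refl)
    fix a c assume "a \<in> R" "c \<in> R"
    then have "a \<in> Oi" "c \<in> Oi" using R_O by auto
    then show "ind (dv 1 (G a c - 0)) = ind (dv 1 (a * a - 0))" using G_dv1[of a c 0] by simp
  qed
  also have "\<dots> = (\<Sum>a\<in>R. q * ind (dv 1 (a * a - 0)))" using R_card by simp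
  also have "\<dots> = q * (\<Sum>a\<in>R. ind (dv 1 (a * a - 0)))" by (simp add: sum_distrib_left)
  also have "\<dots> = q" using sqrt1[OF O_0] by simp
  finally show ?thesis .
qed

lemma NG_0_2: "NG 2 0 = q ^ 3"
proof -
  have iff: "dv 2 (G a c - 0) \<longleftrightarrow> dv 1 a" if "a \<in> Oi" "c \<in> Oi" for a c
  proof
    assume "dv 2 (G a c - 0)"
    then have "dv 1 (G a c)" using dv_mono by fastforce
    then show "dv 1 a" using G_a_dv1 that by blast
  next
    assume "dv 1 a"
    then obtain a' where a': "a' \<in> Oi" "a = 2 * a'" using dv1_E by blast
    have "phi a' c \<in> Oi" using a' that uO unfolding phi_def by (intro O_add O_diff O_mult)
    then have "dv (0 + 2) (4 * phi a' c)" using dv_4_iff O_iff by blast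
    then show "dv 2 (G a c - 0)" using a' G_2 by (simp add: numeral_2_eq_2)
  qed
  have two: "(2::nat) = Suc (Suc 0)" by simp
  have "NG 2 0 = (\<Sum>a\<in>Rn 2. \<Sum>c\<in>Rn 2. ind (dv 1 a))"
    unfolding NG_def S2_def
  proof (intro sum.cong refl)
    fix a c assume "a \<in> Rn 2" "c \<in> Rn 2"
    then have "a \<in> Oi" "c \<in> Oi" using Rn_O by auto
    then show "ind (dv 2 (G a c - 0)) = ind (dv 1 a)" using iff by simp
  qed
  also have "\<dots> = (\<Sum>a\<in>Rn 2. q ^ 2 * ind (dv 1 a))" using Rn_card by simp
  also have "\<dots> = q ^ 2 * (\<Sum>a\<in>Rn (Suc (Suc 0)). ind (dv 1 a))" by (simp add: sum_distrib_left two)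
  also have "(\<Sum>a\<in>Rn (Suc (Suc 0)). ind (dv 1 a)) = (\<Sum>y\<in>Rn (Suc 0). ind (dv 1 (2 * y)))"
  proof (rule sum_even)
    fix r y assume ry: "r \<in> R" "y \<in> Rn (Suc 0)" "r \<noteq> 0"
    then have "y \<in> Oi" using Rn_O by blast
    then show "ind (dv 1 (r + 2 * y)) = 0" using dv1_r2y ry by (auto simp: ind_def)
  qed
  also have "\<dots> = (\<Sum>y\<in>R. 1)" unfolding Rn1' using dv2x R_O by (intro sum.cong refl) (auto simp: ind_def)
  also have "\<dots> = q" using R_card by simp
  finally show ?thesis by (simp add: power3_eq_cube power2_eq_square)
qed

lemma NG_0_odd: "NG (Suc (2 * k)) 0 = q ^ Suc (2 * k)"
proof (induction k)
  case 0 then show ?case using NG_0_1 by simp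
next
  case (Suc k)
  have "NG (Suc (Suc (Suc (2 * k)))) (4 * 0) = q * q * NG (Suc (2 * k)) 0" by (rule NG_red) (auto simp: O_0)
  then show ?case using Suc by simp
qed

lemma NG_0_even: "NG (Suc (Suc (2 * k))) 0 = q ^ (2 * k + 3)"
proof (induction k)
  case 0 then show ?case using NG_0_2 by (simp add: numeral_2_eq_2)
next
  case (Suc k)
  have "NG (Suc (Suc (Suc (Suc (2 * k))))) (4 * 0) = q * q * NG (Suc (Suc (2 * k))) 0" by (rule NG_red) (auto simp: O_0)
  moreover have "q ^ (2 * Suc k + 3) = q * (q * q ^ (2 * k + 3))"
  proof -
    have e: "2 * Suc k + 3 = Suc (Suc (2 * k + 3))" by simp
    show ?thesis by (simp only: e power_Suc)
  qed
  ultimately show ?case using Suc by simp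
qed

lemma NG_4s:
  assumes s: "s \<in> Oi" "\<not> dv 1 s"
  shows "NG (Suc (Suc (Suc m))) (4 * s) = q ^ (m + 3) * (q + 1)"
proof -
  let ?N = "Suc (Suc (Suc m))"
  let ?P = "\<lambda>a c. dv ?N (G a c - 4 * s)"
  have d2: "dv 2 (4 * s)" using dv_4_iff[of 0 s] s O_iff by (simp add: numeral_2_eq_2)
  have P1: "dv 1 a" if "a \<in> Oi" "c \<in> Oi" "?P a c" for a c
  proof -
    have "dv 2 (G a c - 4 * s)" using that(3) dv_mono by fastforce
    then have "dv 2 ((G a c - 4 * s) + 4 * s)" using dv_add d2 by blast
    then have "dv 1 (G a c)" using dv_mono by fastforce
    then show ?thesis using G_a_dv1 that by blast
  qed
  have "NG ?N (4 * s) = (\<Sum>y\<in>Rn (Suc (Suc m)). \<Sum>c\<in>Rn ?N. ind (?P (2 * y) c))"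
    unfolding NG_def S2_def
  proof (rule sum_even)
    fix r y assume ry: "r \<in> R" "y \<in> Rn (Suc (Suc m))" "r \<noteq> 0"
    have o: "r + 2 * y \<in> Oi" "y \<in> Oi" using ry R_O Rn_O by (auto intro!: O_add O_mult O_2)
    show "(\<Sum>c\<in>Rn ?N. ind (?P (r + 2 * y) c)) = 0"
    proof (rule ind_zero_sum)
      fix c assume "c \<in> Rn ?N"
      then have "c \<in> Oi" using Rn_O by blast
      then show "\<not> ?P (r + 2 * y) c" using P1 o dv1_r2y ry by blast
    qed
  qed
  also have "\<dots> = (\<Sum>y\<in>Rn (Suc (Suc m)). \<Sum>c\<in>Rn ?N. ind (dv (Suc m) (phi y c - s)))"
  proof (intro sum.cong refl)
    fix y c
    have e: "G (2 * y) c - 4 * s = 4 * (phi y c - s)" unfolding G_2 by (simp add: right_diff_distrib)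
    show "ind (?P (2 * y) c) = ind (dv (Suc m) (phi y c - s))"
      by (subst e) (simp only: dv_4_iff[of "Suc m", simplified])
  qed
  also have "\<dots> = (\<Sum>y\<in>Rn (Suc (Suc m)). q * q * (\<Sum>c\<in>Rn (Suc m). ind (dv (Suc m) (phi y c - s))))"
  proof (rule sum.cong[OF refl])
    fix y assume "y \<in> Rn (Suc (Suc m))"
    then have yO: "y \<in> Oi" using Rn_O by blast
    have i1: "invf (Suc m) (\<lambda>c. ind (dv (Suc m) (phi y c - s)))" using phi_inv_c[OF yO] .
    have i2: "invf (Suc (Suc m)) (\<lambda>c. ind (dv (Suc m) (phi y c - s)))" using invf_mono[OF i1] by simp
    show "(\<Sum>c\<in>Rn ?N. ind (dv (Suc m) (phi y c - s))) = q * q * (\<Sum>c\<in>Rn (Suc m). ind (dv (Suc m) (phi y c - s)))"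
      using sum_lift_inv[OF i2] sum_lift_inv[OF i1] by simp
  qed
  also have "\<dots> = q * q * (\<Sum>y\<in>Rn (Suc (Suc m)). (\<Sum>c\<in>Rn (Suc m). ind (dv (Suc m) (phi y c - s))))"
    by (simp add: sum_distrib_left)
  also have "(\<Sum>y\<in>Rn (Suc (Suc m)). (\<Sum>c\<in>Rn (Suc m). ind (dv (Suc m) (phi y c - s))))
       = q * S2 (Rn (Suc m)) (Rn (Suc m)) (\<lambda>a b. dv (Suc m) (phi a b - s))"
    unfolding S2_def
  proof (rule sum_lift_inv)
    show "invf (Suc m) (\<lambda>y. \<Sum>c\<in>Rn (Suc m). ind (dv (Suc m) (phi y c - s)))"
      unfolding invf_def
    proof (intro ballI impI)
      fix x y assume xy: "x \<in> Oi" "y \<in> Oi" "dv (Suc m) (x - y)"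
      show "(\<Sum>c\<in>Rn (Suc m). ind (dv (Suc m) (phi x c - s))) = (\<Sum>c\<in>Rn (Suc m). ind (dv (Suc m) (phi y c - s)))"
      proof (rule sum.cong[OF refl])
        fix c assume "c \<in> Rn (Suc m)"
        then have "c \<in> Oi" using Rn_O by blast
        then show "ind (dv (Suc m) (phi x c - s)) = ind (dv (Suc m) (phi y c - s))"
          using phi_inv_a xy unfolding invf_def by blast
      qed
    qed
  qed
  also have "S2 (Rn (Suc m)) (Rn (Suc m)) (\<lambda>a b. dv (Suc m) (phi a b - s)) = q ^ m * (q + 1)"
    using MP_formula[OF s] .
  finally show ?thesis by (simp add: algebra_simps power_add power3_eq_cube)
qed

end


context lfu begin

lemma sum_bij_rep:
  assumes h: "\<And>x. x \<in> Rn n \<Longrightarrow> h x \<in> Oi"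
    and hi: "\<And>x y. x \<in> Rn n \<Longrightarrow> y \<in> Rn n \<Longrightarrow> dv n (h x - h y) \<Longrightarrow> x = y"
    and F: "invf n (F :: 'k \<Rightarrow> nat)"
  shows "(\<Sum>x\<in>Rn n. F (h x)) = (\<Sum>x\<in>Rn n. F x)"
proof -
  let ?f = "\<lambda>x. rep n (h x)"
  have fR: "?f x \<in> Rn n \<and> dv n (h x - ?f x)" if "x \<in> Rn n" for x
    using rep[OF h[OF that]] .
  have inj: "inj_on ?f (Rn n)"
  proof (rule inj_onI)
    fix x y assume xy: "x \<in> Rn n" "y \<in> Rn n" "?f x = ?f y"
    have h1: "dv n (h x - ?f x)" using fR xy by blast
    have h2: "dv n (h y - ?f x)" using fR xy by simp
    have "dv n (h x - h y)" using dv_trans[OF h1 dv_sym[OF h2]] .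
    then show "x = y" using hi xy by blast
  qed
  have sub: "?f ` Rn n \<subseteq> Rn n" using fR by blast
  have im: "?f ` Rn n = Rn n" using endo_inj_surj[OF Rn_fin sub inj] .
  have "(\<Sum>x\<in>Rn n. F (h x)) = (\<Sum>x\<in>Rn n. F (?f x))"
  proof (rule sum.cong[OF refl])
    fix x assume x: "x \<in> Rn n"
    have o: "h x \<in> Oi" "?f x \<in> Oi" using x fR Rn_O h by auto
    have "dv n (h x - ?f x)" using fR[OF x] by blast
    then show "F (h x) = F (?f x)" using F o unfolding invf_def by blast
  qed
  also have "\<dots> = sum F (?f ` Rn n)" using sum.reindex[OF inj, of F] by simp
  finally show ?thesis using im by simp
qed

lemma B_G: "x1 ^ 2 - (1 + 4 * u) * x2 ^ 2 = G (x1 - x2) x2"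
  by (simp add: G_def power2_eq_square algebra_simps)

lemma NB_NG:
  "S2 (Rn n) (Rn n) (\<lambda>x1 x2. dv n (x1 ^ 2 - (1 + 4 * u) * x2 ^ 2 - \<rho>)) = NG n \<rho>"
proof -
  have "S2 (Rn n) (Rn n) (\<lambda>x1 x2. dv n (x1 ^ 2 - (1 + 4 * u) * x2 ^ 2 - \<rho>))
      = (\<Sum>x2\<in>Rn n. \<Sum>x1\<in>Rn n. ind (dv n (G (x1 + - x2) x2 - \<rho>)))"
    unfolding S2_def B_G by (subst sum.swap) simp
  also have "\<dots> = (\<Sum>x2\<in>Rn n. \<Sum>a\<in>Rn n. ind (dv n (G a x2 - \<rho>)))"
  proof (rule sum.cong[OF refl])
    fix x2 assume "x2 \<in> Rn n"
    then have o: "x2 \<in> Oi" "- x2 \<in> Oi" using Rn_O O_neg by auto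
    show "(\<Sum>x1\<in>Rn n. ind (dv n (G (x1 + - x2) x2 - \<rho>))) = (\<Sum>a\<in>Rn n. ind (dv n (G a x2 - \<rho>)))"
    proof (rule sum_bij_rep[where h="\<lambda>x. x + - x2", OF _ _ G_inv_a[OF o(1)]])
      fix x assume "x \<in> Rn n" then show "x + - x2 \<in> Oi" using Rn_O o O_add by blast
    next
      fix x y assume "x \<in> Rn n" "y \<in> Rn n" "dv n ((x + - x2) - (y + - x2))"
      then show "x = y" using Rn_uniq by simp
    qed
  qed
  also have "\<dots> = NG n \<rho>" unfolding NG_def S2_def by (rule sum.swap)
  finally show ?thesis .
qed

lemma Xl_eq:
  "Xl val q (\<lambda>x1 x2. x1 ^ 2 - (1 + 4 * u) * x2 ^ 2) \<rho> l = real (NG (l + 1) \<rho>) / real q ^ (2 * (l + 1))"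
proof -
  let ?n = "l + 1"
  let ?P = "\<lambda>x1 x2. x1 ^ 2 - (1 + 4 * u) * x2 ^ 2 - \<rho> \<in> ideal_of val (2 ^ ?n)"
  have inv: "inv2 ?n ?P"
    unfolding inv2_def
  proof (intro ballI impI)
    fix x1 x2 y1 y2 assume o: "x1 \<in> Oi" "x2 \<in> Oi" "y1 \<in> Oi" "y2 \<in> Oi"
      and d: "dv ?n (x1 - y1)" "dv ?n (x2 - y2)"
    have fO: "1 + 4 * u \<in> Oi" using uO O_pow[OF O_2, of 2] four by (intro O_add O_mult O_1) auto
    have s1: "x1 + y1 \<in> Oi" using O_add[OF o(1) o(3)] .
    have s2: "(x2 + y2) * (1 + 4 * u) \<in> Oi" using O_mult[OF O_add[OF o(2) o(4)] fO] .
    have "dv ?n ((x1 - y1) * (x1 + y1))" using dv_multO[OF d(1) s1] .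
    moreover have "dv ?n ((x2 - y2) * ((x2 + y2) * (1 + 4 * u)))"
      using dv_multO[OF d(2) s2] .
    ultimately have D: "dv ?n ((x1 - y1) * (x1 + y1) - (x2 - y2) * ((x2 + y2) * (1 + 4 * u)))" by (rule dv_diff)
    have e: "x1 ^ 2 - (1 + 4 * u) * x2 ^ 2 - \<rho> = (y1 ^ 2 - (1 + 4 * u) * y2 ^ 2 - \<rho>) + ((x1 - y1) * (x1 + y1) - (x2 - y2) * ((x2 + y2) * (1 + 4 * u)))"
      by (simp add: power2_eq_square algebra_simps)
    have "dv ?n ((y1 ^ 2 - (1 + 4 * u) * y2 ^ 2 - \<rho>) + ((x1 - y1) * (x1 + y1) - (x2 - y2) * ((x2 + y2) * (1 + 4 * u)))) \<longleftrightarrow> dv ?n (y1 ^ 2 - (1 + 4 * u) * y2 ^ 2 - \<rho>)"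
      by (rule dv_shift[OF D])
    then show "?P x1 x2 \<longleftrightarrow> ?P y1 y2" unfolding dv_def[symmetric] by (subst e)
  qed
  have "card {(cls val ?n x1, cls val ?n x2) | x1 x2. x1 \<in> Oi \<and> x2 \<in> Oi \<and> ?P x1 x2}
      = card {p \<in> Rn ?n \<times> Rn ?n. ?P (fst p) (snd p)}" by (rule cls_count[OF inv])
  also have "\<dots> = S2 (Rn ?n) (Rn ?n) ?P" by (rule card_S2[OF Rn_fin Rn_fin])
  also have "\<dots> = NG ?n \<rho>" using NB_NG[of ?n \<rho>] unfolding dv_def .
  finally show ?thesis unfolding Xl_def by simp
qed

lemma NG_cong: "dv n (\<rho> - \<rho>') \<Longrightarrow> NG n \<rho> = NG n \<rho>'"
  unfolding NG_def S2_def
proof (intro sum.cong refl)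
  fix a c assume d: "dv n (\<rho> - \<rho>')"
  have e: "G a c - \<rho> = (G a c - \<rho>') + - (\<rho> - \<rho>')" by simp
  have dn: "dv n (- (\<rho> - \<rho>'))" using dv_neg d by blast
  have "dv n ((G a c - \<rho>') + - (\<rho> - \<rho>')) \<longleftrightarrow> dv n (G a c - \<rho>')" by (rule dv_shift[OF dn])
  then show "ind (dv n (G a c - \<rho>)) = ind (dv n (G a c - \<rho>'))" by (subst e) simp
qed

lemma NG_4js:
  assumes s: "s \<in> Oi" "\<not> dv 1 s"
  shows "NG (m + 2 * j + 3) (4 * (4 ^ j * s)) = q ^ (m + 2 * j + 3) * (q + 1)"
proof (induction j)
  case 0 then show ?case using NG_4s[OF s, of m] by (simp add: numeral_3_eq_3)
next
  case (Suc j)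
  let ?r = "4 * (4 ^ j * s)"
  have f: "(4::'k) \<in> Oi" using O_pow[OF O_2, of 2] four by simp
  have rO: "?r \<in> Oi" using f s by (intro O_mult O_pow)
  have "(4::'k) = 2 * 2" by simp
  then have "?r = 2 * (2 * (4 ^ j * s))" by simp
  moreover have "2 * (4 ^ j * s) \<in> Oi" using f s by (intro O_mult O_pow O_2)
  ultimately have r1: "dv 1 ?r" using dv2x by metis
  have e: "m + 2 * Suc j + 3 = Suc (Suc (Suc (m + 2 * j + 2)))" by simp
  have "NG (m + 2 * Suc j + 3) (4 * ?r) = q * q * NG (Suc (m + 2 * j + 2)) ?r"
    unfolding e by (rule NG_red[OF rO r1])
  also have "Suc (m + 2 * j + 2) = m + 2 * j + 3" by simp
  finally have "NG (m + 2 * Suc j + 3) (4 * ?r) = q * q * (q ^ (m + 2 * j + 3) * (q + 1))" using Suc by simp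
  moreover have "4 * (4 ^ Suc j * s) = 4 * ?r" by simp
  moreover have "q ^ (m + 2 * Suc j + 3) = q * q * q ^ (m + 2 * j + 3)"
  proof -
    have e2: "m + 2 * Suc j + 3 = Suc (Suc (m + 2 * j + 3))" by simp
    show ?thesis by (simp only: e2 power_Suc mult.assoc)
  qed
  ultimately show ?case by (simp only: mult.assoc)
qed

end


lemma series1:
  fixes z w :: complex and Q :: nat
  assumes Q: "2 \<le> Q" and w: "norm w < 1" "w = z / of_nat Q"
  shows "(\<lambda>l. z ^ l * of_real (1 / real Q ^ (l + 1))) sums (of_real (1 / real Q) / (1 - w))"
proof -
  have Qn: "(of_nat Q :: complex) \<noteq> 0" using Q by simp
  have e: "z ^ l * of_real (1 / real Q ^ (l + 1)) = of_real (1 / real Q) * w ^ l" for l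
    using Qn by (simp add: w(2) power_divide field_simps)
  have "(\<lambda>l. of_real (1 / real Q) * w ^ l) sums (of_real (1 / real Q) * (1 / (1 - w)))"
    by (rule sums_mult[OF geometric_sums[OF w(1)]])
  then show ?thesis unfolding e by simp
qed

lemma sum_pairs: "(\<Sum>i<2 * n. f i) = (\<Sum>k<n. f (2 * k) + f (2 * k + 1))"
  for f :: "nat \<Rightarrow> 'a::comm_monoid_add"
  by (induction n) (simp_all add: algebra_simps)

lemma alg:
  fixes Q w W :: complex
  assumes "Q \<noteq> 0" "1 - w \<noteq> 0" "1 + w \<noteq> 0"
  shows "(Q + 1) / Q * (W * (w * w)) * (1 / (1 - w)) + (1 + Q * w) / Q * ((1 - W * (w * w)) / ((1 - w) * (1 + w)))
       = (1 / Q) * (1 + Q * w + W * (Q * w * w + w * w * w)) / ((1 - w) * (1 + w))"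
proof -
  have e1: "(Q + 1) / Q * (W * (w * w)) * (1 / (1 - w)) = ((Q + 1) * (W * (w * w)) * (1 + w)) / (Q * ((1 - w) * (1 + w)))"
    using assms by (simp add: divide_simps)
  have e2: "(1 + Q * w) / Q * ((1 - W * (w * w)) / ((1 - w) * (1 + w))) = ((1 + Q * w) * (1 - W * (w * w))) / (Q * ((1 - w) * (1 + w)))"
    by simp
  have e3: "(1 / Q) * (1 + Q * w + W * (Q * w * w + w * w * w)) / ((1 - w) * (1 + w)) = (1 + Q * w + W * (Q * w * w + w * w * w)) / (Q * ((1 - w) * (1 + w)))"
    by simp
  have e4: "(Q + 1) * (W * (w * w)) * (1 + w) + (1 + Q * w) * (1 - W * (w * w)) = 1 + Q * w + W * (Q * w * w + w * w * w)"
    by (simp add: algebra_simps)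
  show ?thesis unfolding e1 e2 e3 add_divide_distrib[symmetric] e4 ..
qed

lemma series2:
  fixes z w :: complex and Q T :: nat
  assumes Q: "2 \<le> Q" and w: "norm w < 1" "w = z / of_nat Q"
  defines "X \<equiv> (\<lambda>l. if l < 2 * T + 2 then 1 / real Q ^ (2 * (l div 2) + 1) else (real Q + 1) / real Q ^ (l + 1))"
  shows "(\<lambda>l. z ^ l * of_real (X l)) sums
           (of_real (1 / real Q) * (1 + z + w ^ (2 * T) * (z * w + w ^ 3)) / (1 - w ^ 2))"
proof -
  let ?Q = "(of_nat Q :: complex)"
  let ?N = "2 * T + 2"
  let ?f = "\<lambda>l. z ^ l * of_real (X l)"
  have Qn: "?Q \<noteq> 0" using Q by simp
  have z: "z = ?Q * w" using w(2) Qn by simp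
  have w1: "w \<noteq> 1" "w \<noteq> -1" using w(1) by auto
  have w2: "1 - w ^ 2 \<noteq> 0"
  proof
    assume "1 - w ^ 2 = 0"
    then have "(1 - w) * (1 + w) = 0" by (simp add: power2_eq_square algebra_simps)
    then show False using w1 by (auto simp: add_eq_0_iff)
  qed
  have tail: "?f (i + ?N) = (?Q + 1) / ?Q * w ^ ?N * w ^ i" for i
  proof -
    have "?f (i + ?N) = z ^ (i + ?N) * ((?Q + 1) / ?Q ^ (i + ?N + 1))"
      by (simp add: X_def)
    also have "\<dots> = (?Q + 1) / ?Q * w ^ ?N * w ^ i"
      using Qn by (simp add: z power_mult_distrib power_add field_simps)
    finally show ?thesis .
  qed
  have "(\<lambda>i. (?Q + 1) / ?Q * w ^ ?N * w ^ i) sums ((?Q + 1) / ?Q * w ^ ?N * (1 / (1 - w)))"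
    by (rule sums_mult[OF geometric_sums[OF w(1)]])
  then have "(\<lambda>i. ?f (i + ?N)) sums ((?Q + 1) / ?Q * w ^ ?N * (1 / (1 - w)))" unfolding tail .
  then have S: "?f sums ((?Q + 1) / ?Q * w ^ ?N * (1 / (1 - w)) + (\<Sum>i<?N. ?f i))"
    using sums_iff_shift[where f="?f" and n="?N"] by blast
  have fin: "(\<Sum>i<?N. ?f i) = (1 + z) / ?Q * (\<Sum>k<T + 1. (w ^ 2) ^ k)"
  proof -
    have e: "?N = 2 * (T + 1)" by simp
    have "(\<Sum>i<?N. ?f i) = (\<Sum>i<2 * (T + 1). ?f i)" by (simp only: e)
    also have "\<dots> = (\<Sum>k<T + 1. ?f (2 * k) + ?f (2 * k + 1))" by (rule sum_pairs)
    finally have "(\<Sum>i<?N. ?f i) = (\<Sum>k<T + 1. ?f (2 * k) + ?f (2 * k + 1))" .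
    also have "\<dots> = (\<Sum>k<T + 1. (1 + z) / ?Q * (w ^ 2) ^ k)"
    proof (rule sum.cong[OF refl])
      fix k assume "k \<in> {..<T + 1}"
      then have k: "2 * k < ?N" "2 * k + 1 < ?N" by auto
      have d1: "(2 * k) div 2 = k" "(2 * k + 1) div 2 = k" by auto
      have f1: "?f (2 * k) = z ^ (2 * k) / ?Q ^ (2 * k + 1)" using k d1 by (simp add: X_def)
      have f2: "?f (2 * k + 1) = z ^ (2 * k + 1) / ?Q ^ (2 * k + 1)" using k d1 by (simp add: X_def)
      have zk: "z ^ (2 * k) = ?Q ^ (2 * k) * (w ^ 2) ^ k"
        by (simp add: z power_mult_distrib power_mult)
      have "?f (2 * k) + ?f (2 * k + 1) = z ^ (2 * k) * (1 + z) / ?Q ^ (2 * k + 1)"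
        unfolding f1 f2 by (simp add: add_divide_distrib algebra_simps)
      also have "\<dots> = (?Q ^ (2 * k) / ?Q ^ (2 * k + 1)) * ((w ^ 2) ^ k * (1 + z))"
        unfolding zk by simp
      also have "?Q ^ (2 * k) / ?Q ^ (2 * k + 1) = 1 / ?Q" using Qn by simp
      finally show "?f (2 * k) + ?f (2 * k + 1) = (1 + z) / ?Q * (w ^ 2) ^ k" by simp
    qed
    also have "\<dots> = (1 + z) / ?Q * (\<Sum>k<T + 1. (w ^ 2) ^ k)" by (simp only: sum_distrib_left)
    finally show ?thesis .
  qed
  have gs: "(\<Sum>k<T + 1. (w ^ 2) ^ k) = (1 - (w ^ 2) ^ (T + 1)) / (1 - w ^ 2)"
  proof -
    have "w ^ 2 \<noteq> 1" using w2 by simp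
    then show ?thesis by (subst sum_gp_strict) simp
  qed
  have fin_eq: "(?Q + 1) / ?Q * w ^ ?N * (1 / (1 - w)) + (1 + z) / ?Q * ((1 - (w ^ 2) ^ (T + 1)) / (1 - w ^ 2))
      = of_real (1 / real Q) * (1 + z + w ^ (2 * T) * (z * w + w ^ 3)) / (1 - w ^ 2)"
  proof -
    let ?W = "w ^ (2 * T)"
    have p1: "w ^ ?N = ?W * (w * w)" by (simp add: power_add power2_eq_square)
    have "(w ^ 2) ^ (T + 1) = w ^ (2 * (T + 1))" by (rule power_mult[symmetric])
    also have "2 * (T + 1) = ?N" by simp
    finally have p2: "(w ^ 2) ^ (T + 1) = ?W * (w * w)" using p1 by simp
    have om: "1 - w \<noteq> 0" using w1 by simp
    have fac: "1 - w ^ 2 = (1 - w) * (1 + w)" by (simp add: power2_eq_square algebra_simps)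
    have r: "of_real (1 / real Q) = 1 / ?Q" by simp
    have op: "1 + w \<noteq> 0" using w1 by (auto simp: add_eq_0_iff)
    show ?thesis unfolding p1 p2 fac r z power3_eq_cube by (rule alg[OF Qn om op])
  qed
  show ?thesis using S unfolding fin gs fin_eq .
qed


lemma pow_half: "(Q::real) > 0 \<Longrightarrow> Q ^ n / Q ^ (2 * n) = 1 / Q ^ n"
proof -
  assume Q: "Q > 0"
  have "Q ^ (2 * n) = Q ^ n * Q ^ n" by (simp add: mult_2 power_add)
  then show ?thesis using Q by simp
qed

theorem proposition6p5:
  fixes val :: "'k::field \<Rightarrow> int" and q :: nat and \<Delta> u t :: 'k and T :: nat and \<beta> :: complex
  assumes "unram2_local_field val q"
    and "u \<noteq> 0" and "val u = 0" and "\<Delta> = 1 + 4 * u"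
    and "quad_defect val \<Delta> = ideal_of val 4"
    and "t \<in> intg val" and "t \<noteq> 0" and "val t = int T"
    and "0 < Re \<beta>"
  defines "z \<equiv> (of_nat q :: complex) powr (- \<beta>)"
    and "w \<equiv> (of_nat q :: complex) powr (- \<beta>) / of_nat q"
    and "B \<equiv> (\<lambda>x1 x2. x1 ^ 2 - \<Delta> * x2 ^ 2)"
  shows "(\<lambda>l. z ^ l * of_real (Xl val q B 1 l)) sums (of_real (1 / real q) / (1 - w)) \<and>
         (\<lambda>l. z ^ l * of_real (Xl val q B (4 * t ^ 2) l)) sums
           (of_real (1 / real q) * (1 + z + w ^ (2 * T) * (z * w + w ^ 3)) / (1 - w ^ 2))"
proof -
  have lfa: "lf val q" using assms(1) unfolding unram2_local_field_def by (intro lf.intro) auto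
  interpret lf val q by (rule lfa)
  have uO: "u \<in> intg val" using assms(3) by (simp add: intg_def)
  have anis: "\<not> dv 1 (r * r + r - u)" if r: "r \<in> intg val" for r
  proof
    assume d: "dv 1 (r * r + r - u)"
    obtain m where m: "m \<in> intg val" "r * r + r - u = 2 * m" using dv1_E[OF d] by blast
    have um: "u = r * r + r - 2 * m" using m(2) by (simp add: algebra_simps)
    have "\<Delta> - (- 8 * m) = (1 + 2 * r) ^ 2" unfolding assms(4) um by (simp add: power2_eq_square algebra_simps)
    then have "ideal_of val (- 8 * m) \<in> {ideal_of val b | b. \<exists>y. \<Delta> - b = y ^ 2}" by blast
    then have "quad_defect val \<Delta> \<subseteq> ideal_of val (- 8 * m)" unfolding quad_defect_def by blast
    moreover have "(4::'k) \<in> ideal_of val 4" unfolding ideal_of_def using O_1 by (intro image_eqI[where x=1]) auto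
    ultimately have "(4::'k) \<in> ideal_of val (- 8 * m)" using assms(5) by blast
    then obtain c where c: "c \<in> intg val" "4 = - 8 * m * c" unfolding ideal_of_def by auto
    have "(4::'k) * (2 * (- (m * c))) = - 8 * m * c" by (simp add: algebra_simps)
    also have "\<dots> = 4 * 1" using c(2) by simp
    finally have e4: "(4::'k) * (2 * (- (m * c))) = 4 * 1" .
    have f22: "(4::'k) = 2 * 2" by simp
    have n4: "(4::'k) \<noteq> 0" by (subst f22) (rule no_zero_divisors[OF two_nz two_nz])
    have e: "2 * (- (m * c)) = 1" using mult_left_cancel[OF n4, of "2 * (- (m * c))" 1] e4 by blast
    have "- (m * c) \<in> intg val" using m c O_mult O_neg by blast
    then have "dv (Suc 0) (2 * (- (m * c)))" using dv_Suc_2[of 0] O_iff by blast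
    then have "dv 1 (1::'k)" using e by simp
    then show False using not_dv1_1 by blast
  qed
  interpret L: lfu val q u by (rule lfu.intro[OF lfa]) (rule lfu_axioms.intro[OF uO anis])
  have Bd: "B = (\<lambda>x1 x2. x1 ^ 2 - (1 + 4 * u) * x2 ^ 2)" using B_def assms(4) by simp
  have q2: "2 \<le> q" by (rule q_ge2)
  have qpos: "real q > 0" using q2 by simp
  have X1: "Xl val q B 1 l = 1 / real q ^ (l + 1)" for l
  proof -
    have "Xl val q B 1 l = real (L.NG (l + 1) 1) / real q ^ (2 * (l + 1))" unfolding Bd by (rule L.Xl_eq)
    also have "L.NG (l + 1) 1 = q ^ (l + 1)" using L.NG_1[of l] by simp
    finally show ?thesis using pow_half[OF qpos, of "l + 1"] by simp
  qed
  define t0 where "t0 = t / 2 ^ T"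
  have t0nz: "t0 \<noteq> 0" using assms(7) two_pow_nz by (simp add: t0_def)
  have vt0: "val t0 = 0" using val_div[OF assms(7) two_pow_nz] val_2pow assms(8) by (simp add: t0_def)
  have t0O: "t0 \<in> intg val" using vt0 by (simp add: intg_def)
  have t0u: "\<not> dv 1 t0" using vt0 t0nz by (simp add: dv_iff)
  define s where "s = t0 * t0"
  have sO: "s \<in> intg val" using t0O O_mult by (simp add: s_def)
  have su: "\<not> dv 1 s"
  proof
    assume "dv 1 s"
    then have "dv 1 (t0 * t0)" by (simp add: s_def)
    then have "dv 1 t0" by (rule dv_sq)
    then show False using t0u by blast
  qed
  have tt: "t = 2 ^ T * t0" using two_pow_nz by (simp add: t0_def)
  have t4: "4 * t ^ 2 = 4 * (4 ^ T * s)"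
  proof -
    have "t ^ 2 = (2 ^ T) ^ 2 * t0 ^ 2" unfolding tt by (rule power_mult_distrib)
    also have "((2::'k) ^ T) ^ 2 = (2 ^ 2) ^ T" by (simp only: power_mult[symmetric] mult.commute)
    finally show ?thesis by (simp add: s_def power2_eq_square)
  qed
  have t4b: "4 * t ^ 2 = 2 ^ (2 * T + 2) * s"
  proof -
    have p: "(2::'k) ^ (2 * T + 2) = 4 * 4 ^ T" by (simp add: power_add power_mult)
    show ?thesis by (simp only: t4 p mult.assoc)
  qed
  have X2: "Xl val q B (4 * t ^ 2) l = (if l < 2 * T + 2 then 1 / real q ^ (2 * (l div 2) + 1) else (real q + 1) / real q ^ (l + 1))" for l
  proof -
    have XX: "Xl val q B (4 * t ^ 2) l = real (L.NG (l + 1) (4 * t ^ 2)) / real q ^ (2 * (l + 1))"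
      unfolding Bd by (rule L.Xl_eq)
    show ?thesis
    proof (cases "l < 2 * T + 2")
      case True
      have "dv (2 * T + 2) (2 ^ (2 * T + 2) * s)" using dv_2pow_mult[OF sO] .
      then have "dv (2 * T + 2) (4 * t ^ 2)" by (simp only: t4b)
      then have "dv (l + 1) (4 * t ^ 2)" using dv_mono True by (metis Suc_eq_plus1 Suc_leI)
      then have "dv (l + 1) (4 * t ^ 2 - 0)" by simp
      then have N0: "L.NG (l + 1) (4 * t ^ 2) = L.NG (l + 1) 0" by (rule L.NG_cong)
      define k where "k = l div 2"
      have k: "l = 2 * k \<or> l = 2 * k + 1" unfolding k_def by presburger
      then show ?thesis
      proof
        assume l: "l = 2 * k"
        have NG: "L.NG (l + 1) (4 * t ^ 2) = q ^ (l + 1)" using N0 L.NG_0_odd[of k] l by simp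
        have "Xl val q B (4 * t ^ 2) l = real q ^ (l + 1) / real q ^ (2 * (l + 1))" using XX NG by simp
        also have "\<dots> = 1 / real q ^ (l + 1)" by (rule pow_half[OF qpos])
        also have "l + 1 = 2 * (l div 2) + 1" using l by simp
        finally show ?thesis using True by simp
      next
        assume l: "l = 2 * k + 1"
        have NG: "L.NG (l + 1) (4 * t ^ 2) = q ^ (2 * k + 3)" using N0 L.NG_0_even[of k] l by simp
        have e: "2 * (l + 1) = (2 * k + 3) + (2 * k + 1)" using l by simp
        have "Xl val q B (4 * t ^ 2) l = real q ^ (2 * k + 3) / real q ^ (2 * (l + 1))" using XX NG by simp
        also have "\<dots> = real q ^ (2 * k + 3) / (real q ^ (2 * k + 3) * real q ^ (2 * k + 1))"
          by (simp only: e power_add)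
        also have "\<dots> = 1 / real q ^ (2 * k + 1)" using qpos by simp
        also have "2 * k + 1 = 2 * (l div 2) + 1" using l by simp
        finally show ?thesis using True by simp
      qed
    next
      case False
      define m where "m = l - (2 * T + 2)"
      have lm: "l + 1 = m + 2 * T + 3" using False by (simp add: m_def)
      have NGb: "L.NG (l + 1) (4 * t ^ 2) = q ^ (l + 1) * (q + 1)"
        unfolding lm t4 using L.NG_4js[OF sO su, of m T] by simp
      have rN: "real (L.NG (l + 1) (4 * t ^ 2)) = real q ^ (l + 1) * (real q + 1)" unfolding NGb by (simp add: algebra_simps)
      have "Xl val q B (4 * t ^ 2) l = real q ^ (l + 1) * (real q + 1) / real q ^ (2 * (l + 1))"
        by (simp only: XX rN)
      also have "\<dots> = (real q ^ (l + 1) / real q ^ (2 * (l + 1))) * (real q + 1)" by simp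
      also have "\<dots> = (real q + 1) / real q ^ (l + 1)" using pow_half[OF qpos, of "l + 1"] by simp
      finally show ?thesis using False by simp
    qed
  qed
  have wz: "w = z / of_nat q" by (simp add: w_def z_def)
  have nz: "norm z \<le> 1"
  proof -
    have "norm z = real q powr (- Re \<beta>)" unfolding z_def by (subst norm_powr_real_powr) auto
    also have "\<dots> \<le> real q powr 0" using q2 assms(9) by (intro powr_mono) auto
    finally show ?thesis using q2 by simp
  qed
  have nw: "norm w < 1"
  proof -
    have "norm w = norm z / real q" unfolding wz by (simp add: norm_divide)
    also have "\<dots> \<le> 1 / real q" using nz qpos by (simp add: divide_right_mono)
    also have "\<dots> < 1" using q2 by simp
    finally show ?thesis .
  qed
  have S1: "(\<lambda>l. z ^ l * of_real (Xl val q B 1 l)) sums (of_real (1 / real q) / (1 - w))"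
    unfolding X1 by (rule series1[OF q2 nw wz])
  have S2: "(\<lambda>l. z ^ l * of_real (Xl val q B (4 * t ^ 2) l)) sums
           (of_real (1 / real q) * (1 + z + w ^ (2 * T) * (z * w + w ^ 3)) / (1 - w ^ 2))"
    unfolding X2 by (rule series2[OF q2 nw wz])
  show ?thesis using S1 S2 by blast
qed


end
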